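(* The number $|\Pi_{\mathfrak t}^+|$ of isotropy summands of the following flag manifolds of classical Lie groups is: (A) $SU(n)/S(U(n_1)\times\cdots\times U(n_s))$, $n=\sum n_i$: $s(s-1)/2$. (B i) $SO(2n+1)/U(n_1)\times\cdots\times U(n_s)\times U(1)^m$, $n\ge 2$: $(s+m)^2+s$. (B ii) $SO(2n+1)/U(n_1)\times\cdots\times U(n_s)\times U(1)^m\times SO(2t+1)$, $t\ge2$: $(s+m)^2+s$. (C i) $Sp(n)/U(n_1)\times\cdots\times U(n_s)\times U(1)^m$, $n\ge3$: $(s+m)^2$. (C ii) $Sp(n)/U(n_1)\times\cdots\times U(n_s)\times U(1)^m\times Sp(t)$, $t\ge3$: $(s+m)^2+(s+m)$. (D i) $SO(2n)/U(n_1)\times\cdots\times U(n_s)\times U(1)^m$, $n\ge4$: $(s+m)^2-m$. (D ii) $SO(2n)/U(n_1)\times\cdots\times U(n_s)\times U(1)^m\times SO(2t)$, $t\ge4$: $(s+m)^2+s$. Here in cases (B i), (C i), (D i) one has $\sum n_i+m=n$, $n_i>1$, $m,s\ge0$; in cases (B ii), (C ii), (D ii) one has $\sum n_i+t+m=n$, $n_i>1$, $m,s\ge0$.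
   Context: For a flag manifold $M=U/K$ of a compact semisimple Lie group, with complexified Lie algebra $\mathfrak g$, Cartan subalgebra $\mathfrak h$, root system $\Pi$, and isotropy algebra with complexification $\mathfrak k^{\mathbb C}=\mathfrak h\oplus\bigoplus_{\alpha\in\Pi_\Theta}\mathfrak g_\alpha$ (for a subset $\Pi_\Theta$ of roots generated by a set of simple roots), let $\Pi_M=\Pi\setminus\Pi_\Theta$, $\mathfrak t=\{H\in i\mathfrak h_{\mathbb R}:\alpha(H)=0\ \forall\alpha\in\Pi_\Theta\}$ (where $\mathfrak h_{\mathbb R}$ is the real span of the coroots), and $k$ the restriction of functionals to $\mathfrak t$. The t-roots are $\Pi_{\mathfrak t}=k(\Pi_M)$ and the positive t-roots $\Pi^+_{\mathfrak t}=k(\Pi_M\cap\Pi^+)$. Positive t-roots $\xi$ are in bijection with the irreducible summands $\mathfrak m_\xi=\sum_{k(\alpha)=\xi}\mathfrak u_\alpha$ (with $\mathfrak u_\alpha$ the real span of $X_\alpha-X_{-\alpha},\,i(X_\alpha+X_{-\alpha})$) of the isotropy representation on the tangent space $\mathfrak m=\bigoplus_\xi\mathfrak m_\xi$; the number of isotropy summands is $|\Pi^+_{\mathfrak t}|$. The subgroups are the standard block embeddings (the $U(n_i)$ and $U(1)$ factors corresponding to consecutive blocks of the coordinates $\varepsilon_1,\dots,\varepsilon_n$ of the standard Cartan subalgebra, the last factor $SO(2t+1)$, $Sp(t)$ or $SO(2t)$ to the last $t$ coordinates). *)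

theory Defs
  imports Complex_Main
begin

text \<open>Linear functionals on the standard Cartan subalgebra are represented by their
coordinates with respect to eps_0, ..., eps_(n-1) (0-based), as functions nat => real
vanishing beyond n. Elements H of t are represented the same way; the pairing is the
standard one: alpha(H) = sum_{j<n} alpha_j H_j.\<close>

definition eps :: "nat \<Rightarrow> nat \<Rightarrow> real" where
  "eps i = (\<lambda>k. if k = i then 1 else 0)"

definition pair :: "nat \<Rightarrow> (nat \<Rightarrow> real) \<Rightarrow> (nat \<Rightarrow> real) \<Rightarrow> real" where
  "pair n \<alpha> H = (\<Sum>j<n. \<alpha> j * H j)"

definition rootsA :: "nat \<Rightarrow> (nat \<Rightarrow> real) set" where
  "rootsA n = {(\<lambda>k. eps i k - eps j k) | i j. i < n \<and> j < n \<and> i \<noteq> j}"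
definition posA :: "nat \<Rightarrow> (nat \<Rightarrow> real) set" where
  "posA n = {(\<lambda>k. eps i k - eps j k) | i j. i < j \<and> j < n}"

definition rootsD :: "nat \<Rightarrow> (nat \<Rightarrow> real) set" where
  "rootsD n = {(\<lambda>k. a * eps i k + b * eps j k) | i j a b.
      i < n \<and> j < n \<and> i \<noteq> j \<and> a \<in> {1, -1} \<and> b \<in> {1, -1}}"
definition posD :: "nat \<Rightarrow> (nat \<Rightarrow> real) set" where
  "posD n = {(\<lambda>k. eps i k + b * eps j k) | i j b. i < j \<and> j < n \<and> b \<in> {1, -1}}"

definition rootsB :: "nat \<Rightarrow> (nat \<Rightarrow> real) set" where
  "rootsB n = rootsD n \<union> {(\<lambda>k. a * eps i k) | i a. i < n \<and> a \<in> {1, -1}}"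
definition posB :: "nat \<Rightarrow> (nat \<Rightarrow> real) set" where
  "posB n = posD n \<union> {eps i | i. i < n}"

definition rootsC :: "nat \<Rightarrow> (nat \<Rightarrow> real) set" where
  "rootsC n = rootsD n \<union> {(\<lambda>k. 2 * a * eps i k) | i a. i < n \<and> a \<in> {1, -1}}"
definition posC :: "nat \<Rightarrow> (nat \<Rightarrow> real) set" where
  "posC n = posD n \<union> {(\<lambda>k. 2 * eps i k) | i. i < n}"

text \<open>Last simple roots: eps_(n-1) (B), 2 eps_(n-1) (C), eps_(n-2)+eps_(n-1) (D);
the other simple roots are eps_i - eps_(i+1).\<close>
definition lastB :: "nat \<Rightarrow> nat \<Rightarrow> real" where "lastB n = eps (n - 1)"
definition lastC :: "nat \<Rightarrow> nat \<Rightarrow> real" where "lastC n = (\<lambda>k. 2 * eps (n - 1) k)"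
definition lastD :: "nat \<Rightarrow> nat \<Rightarrow> real" where "lastD n = (\<lambda>k. eps (n - 2) k + eps (n - 1) k)"

definition same_block :: "nat list \<Rightarrow> nat \<Rightarrow> nat \<Rightarrow> bool" where
  "same_block bs i j = (\<exists>k < length bs.
     sum_list (take k bs) \<le> i \<and> i < sum_list (take (Suc k) bs) \<and>
     sum_list (take k bs) \<le> j \<and> j < sum_list (take (Suc k) bs))"

definition block_simple_roots :: "nat list \<Rightarrow> (nat \<Rightarrow> real) set" where
  "block_simple_roots bs = {(\<lambda>k. eps i k - eps (Suc i) k) | i.
      Suc i < sum_list bs \<and> same_block bs i (Suc i)}"

definition PiTheta :: "(nat \<Rightarrow> real) set \<Rightarrow> (nat \<Rightarrow> real) set \<Rightarrow> (nat \<Rightarrow> real) set" where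
  "PiTheta Pi Th = {\<alpha> \<in> Pi. \<exists>c :: (nat \<Rightarrow> real) \<Rightarrow> int.
      \<alpha> = (\<lambda>k. \<Sum>\<beta>\<in>Th. of_int (c \<beta>) * \<beta> k)}"

definition tspace :: "nat \<Rightarrow> (nat \<Rightarrow> real) set \<Rightarrow> (nat \<Rightarrow> real) set \<Rightarrow> (nat \<Rightarrow> real) set" where
  "tspace n Pi Th = {H. (\<forall>j\<ge>n. H j = 0) \<and> (\<forall>\<alpha>\<in>PiTheta Pi Th. pair n \<alpha> H = 0)}"

definition kres :: "nat \<Rightarrow> (nat \<Rightarrow> real) set \<Rightarrow> (nat \<Rightarrow> real) \<Rightarrow> (nat \<Rightarrow> real) \<Rightarrow> real" where
  "kres n T \<alpha> = (\<lambda>H. if H \<in> T then pair n \<alpha> H else 0)"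

definition pos_t_roots :: "nat \<Rightarrow> (nat \<Rightarrow> real) set \<Rightarrow> (nat \<Rightarrow> real) set \<Rightarrow> (nat \<Rightarrow> real) set
    \<Rightarrow> ((nat \<Rightarrow> real) \<Rightarrow> real) set" where
  "pos_t_roots n Pi Pos Th = kres n (tspace n Pi Th) ` ((Pi - PiTheta Pi Th) \<inter> Pos)"

end

theory Submission
  imports Defs
begin


definition Pb :: "nat list \<Rightarrow> nat \<Rightarrow> nat" where
  "Pb bs a = sum_list (take a bs)"
definition blk :: "nat list \<Rightarrow> nat \<Rightarrow> nat" where
  "blk bs i = (LEAST a. i < Pb bs (Suc a))"

lemma Pb_Suc: "a < length bs \<Longrightarrow> Pb bs (Suc a) = Pb bs a + bs ! a"
  by (simp add: Pb_def take_Suc_conv_app_nth)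

lemma Pb_Suc_le: "Pb bs a \<le> Pb bs (Suc a)"
proof (cases "a < length bs")
  case True then show ?thesis by (simp add: Pb_Suc)
next
  case False then show ?thesis by (simp add: Pb_def)
qed

lemma Pb_mono: "a \<le> b \<Longrightarrow> Pb bs a \<le> Pb bs b"
  using Pb_Suc_le by (rule lift_Suc_mono_le)

lemma Pb_len: "length bs \<le> a \<Longrightarrow> Pb bs a = sum_list bs"
  by (simp add: Pb_def)

lemma Pb_0[simp]: "Pb bs 0 = 0" by (simp add: Pb_def)

lemma Pb_strict:
  assumes pos: "\<forall>x\<in>set bs. 0 < x" and "a < b" "a < length bs"
  shows "Pb bs a < Pb bs b"
proof -
  have "bs ! a > 0" using pos assms(3) by auto
  then have "Pb bs a < Pb bs (Suc a)" using Pb_Suc[OF assms(3)] by simp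
  also have "\<dots> \<le> Pb bs b" using assms(2) by (intro Pb_mono) simp
  finally show ?thesis .
qed

lemma Pb_lt_sum:
  assumes pos: "\<forall>x\<in>set bs. 0 < x" and "a < length bs"
  shows "Pb bs a < sum_list bs"
  using Pb_strict[OF pos, of a "length bs"] assms Pb_len[of bs "length bs"] by simp

lemma blk_props:
  assumes "i < sum_list bs"
  shows "blk bs i < length bs \<and> Pb bs (blk bs i) \<le> i \<and> i < Pb bs (Suc (blk bs i))"
proof -
  have ne: "length bs > 0" using assms by (cases bs) auto
  have ex: "i < Pb bs (Suc (length bs - 1))" using assms ne Pb_len[of bs "Suc (length bs - 1)"] by simp
  have 1: "i < Pb bs (Suc (blk bs i))" unfolding blk_def by (rule LeastI[of "\<lambda>a. i < Pb bs (Suc a)", OF ex])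
  have 2: "blk bs i \<le> length bs - 1" unfolding blk_def by (rule Least_le[of "\<lambda>a. i < Pb bs (Suc a)", OF ex])
  have 3: "Pb bs (blk bs i) \<le> i"
  proof (cases "blk bs i")
    case 0 then show ?thesis by simp
  next
    case (Suc c)
    then have "c < blk bs i" by simp
    then have "\<not> i < Pb bs (Suc c)" unfolding blk_def by (rule not_less_Least)
    then show ?thesis using Suc by simp
  qed
  have "length bs > 0" using ne by simp
  then have "blk bs i < length bs" using 2 by linarith
  then show ?thesis using 1 3 by blast
qed

lemma blk_unique:
  assumes "a < length bs" "Pb bs a \<le> i" "i < Pb bs (Suc a)"
  shows "blk bs i = a"
proof -
  have le: "blk bs i \<le> a" unfolding blk_def by (rule Least_le) (rule assms(3))
  have "i < sum_list bs" using assms(3) Pb_mono[of "Suc a" "length bs" bs] Pb_len[of bs "length bs"] assms(1) by simp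
  then have p: "i < Pb bs (Suc (blk bs i))" using blk_props by blast
  show ?thesis
  proof (rule ccontr)
    assume "blk bs i \<noteq> a"
    then have "Suc (blk bs i) \<le> a" using le by simp
    then have "Pb bs (Suc (blk bs i)) \<le> Pb bs a" by (rule Pb_mono)
    then show False using p assms(2) by simp
  qed
qed

lemma same_block_iff:
  "same_block bs i j \<longleftrightarrow> i < sum_list bs \<and> j < sum_list bs \<and> blk bs i = blk bs j"
proof
  assume "same_block bs i j"
  then obtain k where k: "k < length bs" "Pb bs k \<le> i" "i < Pb bs (Suc k)" "Pb bs k \<le> j" "j < Pb bs (Suc k)"
    unfolding same_block_def Pb_def by blast
  have "Pb bs (Suc k) \<le> sum_list bs" using Pb_mono[of "Suc k" "length bs" bs] Pb_len[of bs "length bs"] k(1) by simp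
  then show "i < sum_list bs \<and> j < sum_list bs \<and> blk bs i = blk bs j"
    using k blk_unique[of k bs i] blk_unique[of k bs j] by simp
next
  assume a: "i < sum_list bs \<and> j < sum_list bs \<and> blk bs i = blk bs j"
  then show "same_block bs i j" using blk_props[of i bs] blk_props[of j bs]
    unfolding same_block_def Pb_def by metis
qed

lemma blk_mono:
  assumes "i \<le> j" "j < sum_list bs"
  shows "blk bs i \<le> blk bs j"
proof -
  have "i < Pb bs (Suc (blk bs j))" using blk_props[OF assms(2)] assms(1) by simp
  then show ?thesis unfolding blk_def by (rule Least_le)
qed

lemma blk_Pb:
  assumes pos: "\<forall>x\<in>set bs. 0 < x" and "a < length bs"
  shows "blk bs (Pb bs a) = a"
proof -
  have "bs ! a > 0" using pos assms(2) by auto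
  then show ?thesis using Pb_Suc[OF assms(2)] by (intro blk_unique assms(2)) auto
qed

lemma blk_lt: "i < sum_list bs \<Longrightarrow> blk bs i < length bs"
  using blk_props by blast



definition Zs :: "(nat \<Rightarrow> real) set \<Rightarrow> (nat \<Rightarrow> real) set" where
  "Zs Th = {\<alpha>. \<exists>c :: (nat \<Rightarrow> real) \<Rightarrow> int. \<alpha> = (\<lambda>k. \<Sum>\<beta>\<in>Th. of_int (c \<beta>) * \<beta> k)}"

lemma PiTheta_eq: "PiTheta Pi Th = Pi \<inter> Zs Th"
  by (auto simp: PiTheta_def Zs_def)

lemma Zs_base: assumes "finite Th" "\<beta> \<in> Th" shows "\<beta> \<in> Zs Th"
proof -
  have "(\<Sum>\<gamma>\<in>Th. of_int (if \<gamma> = \<beta> then 1 else 0) * \<gamma> k) = \<beta> k" for k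
  proof -
    have "(\<Sum>\<gamma>\<in>Th. of_int (if \<gamma> = \<beta> then 1 else 0) * \<gamma> k) = (\<Sum>\<gamma>\<in>Th. if \<gamma> = \<beta> then \<beta> k else 0)"
      by (rule sum.cong) auto
    then show ?thesis using assms by simp
  qed
  then have "\<beta> = (\<lambda>k. \<Sum>\<gamma>\<in>Th. of_int (if \<gamma> = \<beta> then 1 else 0) * \<gamma> k)"
    by simp
  then show ?thesis unfolding Zs_def mem_Collect_eq by (rule exI[of _ "\<lambda>\<gamma>. if \<gamma> = \<beta> then 1 else 0"])
qed

lemma Zs_add: assumes "f \<in> Zs Th" "g \<in> Zs Th" shows "(\<lambda>k. f k + g k) \<in> Zs Th"
proof -
  obtain c where c: "f = (\<lambda>k. \<Sum>\<beta>\<in>Th. of_int (c \<beta>) * \<beta> k)" using assms(1) unfolding Zs_def by blast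
  obtain d where d: "g = (\<lambda>k. \<Sum>\<beta>\<in>Th. of_int (d \<beta>) * \<beta> k)" using assms(2) unfolding Zs_def by blast
  have "(\<lambda>k. f k + g k) = (\<lambda>k. \<Sum>\<beta>\<in>Th. of_int (c \<beta> + d \<beta>) * \<beta> k)"
    by (simp add: c d distrib_right sum.distrib)
  then show ?thesis unfolding Zs_def mem_Collect_eq by (rule exI[of _ "\<lambda>\<beta>. c \<beta> + d \<beta>"])
qed

lemma Zs_neg: assumes "f \<in> Zs Th" shows "(\<lambda>k. - f k) \<in> Zs Th"
proof -
  obtain c where c: "f = (\<lambda>k. \<Sum>\<beta>\<in>Th. of_int (c \<beta>) * \<beta> k)" using assms(1) unfolding Zs_def by blast
  have "(\<lambda>k. - f k) = (\<lambda>k. \<Sum>\<beta>\<in>Th. of_int (- c \<beta>) * \<beta> k)"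
    by (simp add: c sum_negf)
  then show ?thesis unfolding Zs_def mem_Collect_eq by (rule exI[of _ "\<lambda>\<beta>. - c \<beta>"])
qed

lemma Zs_diff: assumes "f \<in> Zs Th" "g \<in> Zs Th" shows "(\<lambda>k. f k - g k) \<in> Zs Th"
  using Zs_add[OF assms(1) Zs_neg[OF assms(2)]] by simp

lemma Zs_cong: "f \<in> Zs Th \<Longrightarrow> f = g \<Longrightarrow> g \<in> Zs Th" by simp

lemma sum_eps: assumes "i < n" shows "(\<Sum>k<n. eps i k * H k) = H i"
proof -
  have "(\<Sum>k<n. eps i k * H k) = (\<Sum>k<n. if k = i then H i else 0)" by (rule sum.cong) (auto simp: eps_def)
  then show ?thesis using assms by simp
qed

lemma pair_eps2: "i < n \<Longrightarrow> j < n \<Longrightarrow>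
   pair n (\<lambda>k. c * eps i k + d * eps j k) H = c * H i + d * H j"
  by (simp add: pair_def distrib_right sum.distrib mult.assoc sum_distrib_left[symmetric] sum_eps)

lemma pair_lin: "pair n (\<lambda>k. \<Sum>\<beta>\<in>Th. of_int (c \<beta>) * \<beta> k) H = (\<Sum>\<beta>\<in>Th. of_int (c \<beta>) * pair n \<beta> H)"
  unfolding pair_def by (simp add: sum_distrib_right sum_distrib_left mult.assoc sum.swap[of _ Th])

lemma tspace_eq:
  assumes "finite Th" "Th \<subseteq> Pi"
  shows "tspace n Pi Th = {H. (\<forall>j\<ge>n. H j = 0) \<and> (\<forall>\<beta>\<in>Th. pair n \<beta> H = 0)}"
proof (intro set_eqI iffI)
  fix H assume "H \<in> tspace n Pi Th"
  moreover have "Th \<subseteq> PiTheta Pi Th" using assms Zs_base by (auto simp: PiTheta_eq)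
  ultimately show "H \<in> {H. (\<forall>j\<ge>n. H j = 0) \<and> (\<forall>\<beta>\<in>Th. pair n \<beta> H = 0)}"
    unfolding tspace_def by blast
next
  fix H assume H: "H \<in> {H. (\<forall>j\<ge>n. H j = 0) \<and> (\<forall>\<beta>\<in>Th. pair n \<beta> H = 0)}"
  have "pair n \<alpha> H = 0" if "\<alpha> \<in> PiTheta Pi Th" for \<alpha>
  proof -
    from that obtain c where c: "\<alpha> = (\<lambda>k. \<Sum>\<beta>\<in>Th. of_int (c \<beta>) * \<beta> k)" unfolding PiTheta_def by auto
    show ?thesis unfolding c pair_lin using H by simp
  qed
  then show "H \<in> tspace n Pi Th" using H unfolding tspace_def by blast
qed

lemma transfer:
  fixes Hb :: "nat \<Rightarrow> nat \<Rightarrow> real" and hv :: "(nat \<Rightarrow> real) \<Rightarrow> nat \<Rightarrow> real"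
  assumes fin: "finite Th" and ThPi: "Th \<subseteq> Pi" and PosPi: "Pos \<subseteq> Pi"
  and Tdef: "T = {H. (\<forall>j\<ge>n. H j = 0) \<and> (\<forall>\<beta>\<in>Th. pair n \<beta> H = 0)}"
  and Hb: "\<And>a. a < r \<Longrightarrow> Hb a \<in> T"
  and hv: "\<And>\<alpha> H. \<alpha> \<in> Pos \<Longrightarrow> H \<in> T \<Longrightarrow> pair n \<alpha> H = (\<Sum>a<r. pair n \<alpha> (Hb a) * hv H a)"
  and Z: "\<And>\<alpha>. \<alpha> \<in> Pos \<Longrightarrow> (\<forall>a<r. pair n \<alpha> (Hb a) = 0) \<Longrightarrow> \<alpha> \<in> Zs Th"
  shows "card (pos_t_roots n Pi Pos Th) =
     card ((\<lambda>\<alpha>. \<lambda>a. if a < r then pair n \<alpha> (Hb a) else 0) ` Pos - {\<lambda>a. 0})"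
proof -
  define V where "V = (\<lambda>\<alpha>. \<lambda>a. if a < r then pair n \<alpha> (Hb a) else (0::real))"
  have ts: "tspace n Pi Th = T" using tspace_eq[OF fin ThPi] Tdef by simp
  have PT: "\<alpha> \<in> PiTheta Pi Th \<longleftrightarrow> V \<alpha> = (\<lambda>a. 0)" if "\<alpha> \<in> Pos" for \<alpha>
  proof
    assume "\<alpha> \<in> PiTheta Pi Th"
    then have "pair n \<alpha> (Hb a) = 0" if "a < r" for a using Hb[OF that] ts unfolding tspace_def by blast
    then show "V \<alpha> = (\<lambda>a. 0)" unfolding V_def by auto
  next
    assume "V \<alpha> = (\<lambda>a. 0)"
    then have "\<forall>a<r. pair n \<alpha> (Hb a) = 0" unfolding V_def by (metis (mono_tags, lifting))
    then show "\<alpha> \<in> PiTheta Pi Th" using Z[OF that] PosPi that by (auto simp: PiTheta_eq)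
  qed
  define S where "S = {\<alpha> \<in> Pos. V \<alpha> \<noteq> (\<lambda>a. 0)}"
  have SS: "(Pi - PiTheta Pi Th) \<inter> Pos = S" using PT PosPi unfolding S_def by auto
  define ev where "ev = (\<lambda>f::(nat\<Rightarrow>real)\<Rightarrow>real. \<lambda>a. if a < r then f (Hb a) else (0::real))"
  define g where "g = (\<lambda>w::nat\<Rightarrow>real. \<lambda>H. if H \<in> T then (\<Sum>a<r. w a * hv H a) else 0)"
  have kg: "kres n T \<alpha> = g (V \<alpha>)" if "\<alpha> \<in> Pos" for \<alpha>
    unfolding kres_def g_def V_def using hv[OF that] by (auto intro!: sum.cong)
  have ek: "ev (kres n T \<alpha>) = V \<alpha>" for \<alpha>
    unfolding ev_def kres_def V_def using Hb by auto
  have inj: "inj_on ev (kres n T ` S)"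
  proof (rule inj_onI)
    fix x y assume "x \<in> kres n T ` S" "y \<in> kres n T ` S" "ev x = ev y"
    then obtain \<alpha> \<beta> where "\<alpha> \<in> S" "\<beta> \<in> S" "x = kres n T \<alpha>" "y = kres n T \<beta>" by blast
    moreover have "V \<alpha> = V \<beta>" using \<open>ev x = ev y\<close> ek calculation by metis
    ultimately show "x = y" using kg unfolding S_def by auto
  qed
  have "pos_t_roots n Pi Pos Th = kres n T ` S" unfolding pos_t_roots_def ts SS ..
  then have "card (pos_t_roots n Pi Pos Th) = card (ev ` kres n T ` S)"
    using card_image[OF inj] by simp
  also have "ev ` kres n T ` S = V ` S" by (simp add: image_image ek)
  also have "V ` S = V ` Pos - {\<lambda>a. 0}" unfolding S_def by auto
  finally show ?thesis unfolding V_def .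
qed



definition Hb :: "nat list \<Rightarrow> nat \<Rightarrow> nat \<Rightarrow> real" where
  "Hb bs a = (\<lambda>k. if k < sum_list bs \<and> blk bs k = a then 1 else 0)"
definition bv :: "nat list \<Rightarrow> nat \<Rightarrow> nat \<Rightarrow> nat \<Rightarrow> real" where
  "bv bs r i = (\<lambda>a. if a < r \<and> i < sum_list bs \<and> blk bs i = a then 1 else 0)"

abbreviation bsr where "bsr \<equiv> block_simple_roots"

lemma bsr_finite: "finite (bsr bs)"
proof -
  have "bsr bs \<subseteq> (\<lambda>i. \<lambda>k. eps i k - eps (Suc i) k) ` {..<sum_list bs}"
    unfolding block_simple_roots_def by auto
  then show ?thesis by (rule finite_subset) simp
qed

lemma bsr_mem: "Suc i < sum_list bs \<Longrightarrow> blk bs i = blk bs (Suc i) \<Longrightarrow>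
   (\<lambda>k. eps i k - eps (Suc i) k) \<in> bsr bs"
  unfolding block_simple_roots_def same_block_iff by auto

lemma bsr_elem: "\<beta> \<in> bsr bs \<Longrightarrow> \<exists>i. \<beta> = (\<lambda>k. eps i k - eps (Suc i) k) \<and> Suc i < sum_list bs \<and> blk bs i = blk bs (Suc i)"
  unfolding block_simple_roots_def same_block_iff by auto

lemma Zs_zero: "(\<lambda>k. 0) \<in> Zs Th"
proof -
  have "(\<lambda>k::nat. 0::real) = (\<lambda>k. \<Sum>\<beta>\<in>Th. of_int ((\<lambda>_. 0) \<beta>) * \<beta> k)" by simp
  then show ?thesis unfolding Zs_def mem_Collect_eq by (rule exI[of _ "\<lambda>_. 0"])
qed

lemma Zs_pair: assumes "\<alpha> \<in> Zs Th" "\<forall>\<beta>\<in>Th. pair n \<beta> H = 0" shows "pair n \<alpha> H = 0"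
proof -
  from assms(1) obtain c where c: "\<alpha> = (\<lambda>k. \<Sum>\<beta>\<in>Th. of_int (c \<beta>) * \<beta> k)" unfolding Zs_def by auto
  show ?thesis unfolding c pair_lin using assms(2) by simp
qed

lemma pair_diff: "i < n \<Longrightarrow> j < n \<Longrightarrow> pair n (\<lambda>k. eps i k - eps j k) H = H i - H j"
  using pair_eps2[of i n j 1 "-1" H] by simp

lemma sb_Zs_up:
  assumes fin: "finite Lr"
  shows "i + d < sum_list bs \<Longrightarrow> blk bs i = blk bs (i + d) \<Longrightarrow>
     (\<lambda>k. eps i k - eps (i + d) k) \<in> Zs (bsr bs \<union> Lr)"
proof (induction d)
  case 0 then show ?case using Zs_zero by simp
next
  case (Suc d)
  have m1: "blk bs i \<le> blk bs (i + d)" by (rule blk_mono) (use Suc in auto)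
  have m2: "blk bs (i + d) \<le> blk bs (i + Suc d)" by (rule blk_mono) (use Suc in auto)
  have e1: "blk bs i = blk bs (i + d)" using m1 m2 Suc by simp
  have e2: "blk bs (i + d) = blk bs (Suc (i + d))" using m1 m2 Suc by simp
  have finT: "finite (bsr bs \<union> Lr)" using bsr_finite fin by simp
  have A: "(\<lambda>k. eps i k - eps (i + d) k) \<in> Zs (bsr bs \<union> Lr)" using Suc e1 by simp
  have B: "(\<lambda>k. eps (i + d) k - eps (Suc (i + d)) k) \<in> Zs (bsr bs \<union> Lr)"
    using Zs_base[OF finT] bsr_mem[of "i + d" bs] e2 Suc by auto
  show ?case using Zs_add[OF A B] by simp
qed

lemma sb_Zs:
  assumes fin: "finite Lr" and "i < sum_list bs" "j < sum_list bs" "blk bs i = blk bs j"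
  shows "(\<lambda>k. eps i k - eps j k) \<in> Zs (bsr bs \<union> Lr)"
proof (cases "i \<le> j")
  case True
  then show ?thesis using sb_Zs_up[OF fin, of i "j - i" bs] assms by simp
next
  case False
  then have "(\<lambda>k. eps j k - eps i k) \<in> Zs (bsr bs \<union> Lr)"
    using sb_Zs_up[OF fin, of j "i - j" bs] assms by simp
  from Zs_neg[OF this] show ?thesis by simp
qed

lemma T_const:
  assumes fin: "finite Lr" and H: "\<forall>\<beta>\<in>bsr bs \<union> Lr. pair (sum_list bs) \<beta> H = 0"
  and "i < sum_list bs" "j < sum_list bs" "blk bs i = blk bs j"
  shows "H i = H j"
  using Zs_pair[OF sb_Zs[OF fin assms(3-5)] H] pair_diff[OF assms(3,4)] by simp

lemma Hb_bsr: "\<beta> \<in> bsr bs \<Longrightarrow> pair (sum_list bs) \<beta> (Hb bs a) = 0"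
  by (auto dest!: bsr_elem simp: pair_diff Hb_def)

lemma coord:
  assumes pos: "\<forall>x\<in>set bs. 0 < x" and rl: "r \<le> length bs" and fin: "finite Lr"
  and H: "\<forall>\<beta>\<in>bsr bs \<union> Lr. pair (sum_list bs) \<beta> H = 0"
  and H6: "r \<le> blk bs i \<Longrightarrow> H i = 0" and i: "i < sum_list bs"
  shows "H i = (\<Sum>a<r. Hb bs a i * H (Pb bs a))"
proof (cases "blk bs i < r")
  case True
  have "(\<Sum>a<r. Hb bs a i * H (Pb bs a)) = (\<Sum>a<r. if a = blk bs i then H (Pb bs (blk bs i)) else 0)"
    by (rule sum.cong) (auto simp: Hb_def i)
  also have "\<dots> = H (Pb bs (blk bs i))" using True by simp
  also have "\<dots> = H i"
    using T_const[OF fin H, of "Pb bs (blk bs i)" i] blk_Pb[OF pos, of "blk bs i"] Pb_lt_sum[OF pos, of "blk bs i"]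
      True rl i by simp
  finally show ?thesis by simp
next
  case False
  then have "(\<Sum>a<r. Hb bs a i * H (Pb bs a)) = 0" by (intro sum.neutral) (auto simp: Hb_def)
  then show ?thesis using H6 False by simp
qed

lemma V_form: "i < sum_list bs \<Longrightarrow> j < sum_list bs \<Longrightarrow>
  (\<lambda>a. if a < r then pair (sum_list bs) (\<lambda>k. c1 * eps i k + c2 * eps j k) (Hb bs a) else 0)
   = (\<lambda>a. c1 * bv bs r i a + c2 * bv bs r j a)"
  by (auto simp: pair_eps2 bv_def Hb_def)

lemma master:
  assumes pos: "\<forall>x\<in>set bs. 0 < x" and n: "n = sum_list bs" and rl: "r \<le> length bs"
  and fin: "finite Lr" and ThPi: "bsr bs \<union> Lr \<subseteq> Pi" and PosPi: "Pos \<subseteq> Pi"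
  and Lr0: "\<And>\<beta> a. \<beta> \<in> Lr \<Longrightarrow> a < r \<Longrightarrow> pair n \<beta> (Hb bs a) = 0"
  and H6: "\<And>H i. (\<forall>\<beta>\<in>bsr bs \<union> Lr. pair n \<beta> H = 0) \<Longrightarrow> i < n \<Longrightarrow> r \<le> blk bs i \<Longrightarrow> H i = 0"
  and forms: "\<And>\<alpha>. \<alpha> \<in> Pos \<Longrightarrow> \<exists>i j c1 c2. i < n \<and> j < n \<and> \<alpha> = (\<lambda>k. c1 * eps i k + c2 * eps j k)"
  and Z: "\<And>\<alpha>. \<alpha> \<in> Pos \<Longrightarrow> (\<forall>a<r. pair n \<alpha> (Hb bs a) = 0) \<Longrightarrow> \<alpha> \<in> Zs (bsr bs \<union> Lr)"
  shows "card (pos_t_roots n Pi Pos (bsr bs \<union> Lr)) =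
     card ((\<lambda>\<alpha>. \<lambda>a. if a < r then pair n \<alpha> (Hb bs a) else 0) ` Pos - {\<lambda>a. 0})"
proof (rule transfer[where T = "{H. (\<forall>j\<ge>n. H j = 0) \<and> (\<forall>\<beta>\<in>bsr bs \<union> Lr. pair n \<beta> H = 0)}"
      and hv = "\<lambda>H a. H (Pb bs a)"])
  show "finite (bsr bs \<union> Lr)" using fin bsr_finite by simp
  show "bsr bs \<union> Lr \<subseteq> Pi" by fact
  show "Pos \<subseteq> Pi" by fact
  show "{H. (\<forall>j\<ge>n. H j = 0) \<and> (\<forall>\<beta>\<in>bsr bs \<union> Lr. pair n \<beta> H = 0)} =
    {H. (\<forall>j\<ge>n. H j = 0) \<and> (\<forall>\<beta>\<in>bsr bs \<union> Lr. pair n \<beta> H = 0)}" ..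
  show "Hb bs a \<in> {H. (\<forall>j\<ge>n. H j = 0) \<and> (\<forall>\<beta>\<in>bsr bs \<union> Lr. pair n \<beta> H = 0)}" if "a < r" for a
    using Hb_bsr Lr0[OF _ that] n by (auto simp: Hb_def)
  show "pair n \<alpha> H = (\<Sum>a<r. pair n \<alpha> (Hb bs a) * H (Pb bs a))"
    if a: "\<alpha> \<in> Pos" and H: "H \<in> {H. (\<forall>j\<ge>n. H j = 0) \<and> (\<forall>\<beta>\<in>bsr bs \<union> Lr. pair n \<beta> H = 0)}" for \<alpha> H
  proof -
    obtain i j c1 c2 where ij: "i < n" "j < n" "\<alpha> = (\<lambda>k. c1 * eps i k + c2 * eps j k)" using forms[OF a] by blast
    have HH: "\<forall>\<beta>\<in>bsr bs \<union> Lr. pair (sum_list bs) \<beta> H = 0" using H n by simp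
    have ci: "H i = (\<Sum>a<r. Hb bs a i * H (Pb bs a))"
      by (rule coord[OF pos rl fin HH]) (use H6 H ij n in auto)
    have cj: "H j = (\<Sum>a<r. Hb bs a j * H (Pb bs a))"
      by (rule coord[OF pos rl fin HH]) (use H6 H ij n in auto)
    show ?thesis unfolding ij(3) using ij
      by (simp add: pair_eps2 ci cj sum_distrib_left distrib_right sum.distrib mult.assoc)
  qed
  show "\<alpha> \<in> Zs (bsr bs \<union> Lr)" if "\<alpha> \<in> Pos" "\<forall>a<r. pair n \<alpha> (Hb bs a) = 0" for \<alpha>
    using Z that by blast
qed



definition Dm :: "nat \<Rightarrow> (nat \<Rightarrow> real) set" where
  "Dm r = (\<lambda>(x,y). \<lambda>a. eps x a - eps y a) ` {(x,y). x < y \<and> y < r}"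
definition Dp :: "nat \<Rightarrow> (nat \<Rightarrow> real) set" where
  "Dp r = (\<lambda>(x,y). \<lambda>a. eps x a + eps y a) ` {(x,y). x < y \<and> y < r}"
definition Ev :: "nat \<Rightarrow> (nat \<Rightarrow> real) set" where
  "Ev r = eps ` {..<r}"
definition Tw :: "nat \<Rightarrow> (nat \<Rightarrow> real) set" where
  "Tw k = (\<lambda>x. \<lambda>a. 2 * eps x a) ` {..<k}"

definition cp :: "nat \<Rightarrow> nat" where "cp r = card {(x,y::nat). x < y \<and> y < r}"

lemma pairs_finite: "finite {(x,y::nat). x < y \<and> y < r}"
  by (rule finite_subset[of _ "{..<r} \<times> {..<r}"]) auto

lemma cp_Suc: "cp (Suc r) = cp r + r"
proof -
  have e: "{(x,y::nat). x < y \<and> y < Suc r} = {(x,y). x < y \<and> y < r} \<union> (\<lambda>x. (x, r)) ` {..<r}"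
    by auto
  have "card ((\<lambda>x. (x, r)) ` {..<r}) = r" by (subst card_image) (auto simp: inj_on_def)
  moreover have "{(x,y). x < y \<and> y < r} \<inter> (\<lambda>x. (x, r)) ` {..<r} = {}" by auto
  ultimately show ?thesis unfolding cp_def e using pairs_finite
    by (subst card_Un_disjoint) auto
qed

lemma cp_formula: "2 * cp r + r = r * r"
proof (induction r)
  case 0 then show ?case by (simp add: cp_def)
next
  case (Suc r) then show ?case by (simp add: cp_Suc)
qed

lemma eps_at: "eps x a = (if a = x then 1 else 0)" by (simp add: eps_def)

lemma card_Dm: "card (Dm r) = cp r"
  unfolding Dm_def cp_def
proof (rule card_image, rule inj_onI, clarsimp)
  fix x y u v assume h: "x < y" "y < r" "u < v" "v < r" "(\<lambda>a. eps x a - eps y a) = (\<lambda>a. eps u a - eps v a)"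
  have 1: "eps x x - eps y x = eps u x - eps v x" using h(5) by metis
  have 2: "eps x y - eps y y = eps u y - eps v y" using h(5) by metis
  show "x = u \<and> y = v" using 1 2 h(1,3) by (auto simp: eps_at split: if_splits)
qed

lemma card_Dp: "card (Dp r) = cp r"
  unfolding Dp_def cp_def
proof (rule card_image, rule inj_onI, clarsimp)
  fix x y u v assume h: "x < y" "y < r" "u < v" "v < r" "(\<lambda>a. eps x a + eps y a) = (\<lambda>a. eps u a + eps v a)"
  have 1: "eps x x + eps y x = eps u x + eps v x" using h(5) by metis
  have 2: "eps x y + eps y y = eps u y + eps v y" using h(5) by metis
  have 3: "eps x u + eps y u = eps u u + eps v u" using h(5) by metis
  show "x = u \<and> y = v" using 1 2 3 h(1,3) by (auto simp: eps_at split: if_splits)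
qed

lemma card_Ev: "card (Ev r) = r"
  unfolding Ev_def
proof (subst card_image)
  show "inj_on eps {..<r}"
  proof (rule inj_onI)
    fix x y assume "eps x = eps y" then have "eps x x = eps y x" by simp
    then show "x = y" by (auto simp: eps_at split: if_splits)
  qed
qed simp

lemma card_Tw: "card (Tw r) = r"
  unfolding Tw_def
proof (subst card_image)
  show "inj_on (\<lambda>x. \<lambda>a. 2 * eps x a) {..<r}"
  proof (rule inj_onI)
    fix x y assume "(\<lambda>a. 2 * eps x a) = (\<lambda>a. 2 * eps y a)" then have "2 * eps x x = 2 * eps y x" by metis
    then show "x = y" by (auto simp: eps_at split: if_splits)
  qed
qed simp

lemma fin_sets: "finite (Dm r)" "finite (Dp r)" "finite (Ev r)" "finite (Tw k)"
  unfolding Dm_def Dp_def Ev_def Tw_def using pairs_finite by auto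

lemma disj: "Dm r \<inter> Dp r' = {}" "Dm r \<inter> Ev r' = {}" "Dm r \<inter> Tw k = {}"
  "Dp r \<inter> Ev r' = {}" "Dp r \<inter> Tw k = {}" "Ev r \<inter> Tw k = {}"
proof -
  show "Dm r \<inter> Dp r' = {}" unfolding Dm_def Dp_def
  proof (auto)
    fix x y u v assume h: "x < y" "u < v" "(\<lambda>a. eps x a - eps y a) = (\<lambda>a. eps u a + eps v a)"
    have "eps x y - eps y y = eps u y + eps v y" using h(3) by metis
    then show False using h by (auto simp: eps_at split: if_splits)
  qed
  show "Dm r \<inter> Ev r' = {}" unfolding Dm_def Ev_def
  proof (auto)
    fix x y u assume h: "x < y" "(\<lambda>a. eps x a - eps y a) = eps u"
    have "eps x y - eps y y = eps u y" using h(2) by metis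
    then show False using h by (auto simp: eps_at split: if_splits)
  qed
  show "Dm r \<inter> Tw k = {}" unfolding Dm_def Tw_def
  proof (auto)
    fix x y u assume h: "x < y" "(\<lambda>a. eps x a - eps y a) = (\<lambda>a. 2 * eps u a)"
    have "eps x y - eps y y = 2 * eps u y" using h(2) by metis
    then show False using h by (auto simp: eps_at split: if_splits)
  qed
  show "Dp r \<inter> Ev r' = {}" unfolding Dp_def Ev_def
  proof (auto)
    fix x y u assume h: "x < y" "(\<lambda>a. eps x a + eps y a) = eps u"
    have 1: "eps x y + eps y y = eps u y" using h(2) by metis
    have 2: "eps x x + eps y x = eps u x" using h(2) by metis
    show False using 1 2 h by (auto simp: eps_at split: if_splits)
  qed
  show "Dp r \<inter> Tw k = {}" unfolding Dp_def Tw_def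
  proof (auto)
    fix x y u assume h: "x < y" "(\<lambda>a. eps x a + eps y a) = (\<lambda>a. 2 * eps u a)"
    have 1: "eps x y + eps y y = 2 * eps u y" using h(2) by metis
    show False using 1 h by (auto simp: eps_at split: if_splits)
  qed
  show "Ev r \<inter> Tw k = {}" unfolding Ev_def Tw_def
  proof (auto)
    fix x u assume h: "eps x = (\<lambda>a. 2 * eps u a)"
    have 1: "eps x x = 2 * eps u x" using h by metis
    show False using 1 by (auto simp: eps_at split: if_splits)
  qed
qed



lemma bv_eq: "i < sum_list bs \<Longrightarrow> bv bs r i = (if blk bs i < r then eps (blk bs i) else (\<lambda>a. 0))"
  by (auto simp: bv_def eps_def)

lemma bv_Pb: assumes pos: "\<forall>x\<in>set bs. 0 < x" and "x < length bs"
  shows "Pb bs x < sum_list bs" "bv bs r (Pb bs x) = (if x < r then eps x else (\<lambda>a. 0))"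
  using Pb_lt_sum[OF pos assms(2)] blk_Pb[OF pos assms(2)] bv_eq by auto

lemma zero_ne_eps: "(\<lambda>a. 0::real) \<noteq> eps x"
proof
  assume "(\<lambda>a. 0::real) = eps x" then have "(0::real) = eps x x" by metis
  then show False by (simp add: eps_def)
qed

lemma img_minus:
  assumes pos: "\<forall>x\<in>set bs. 0 < x" and LL: "length bs = r \<or> length bs = Suc r"
  shows "(\<lambda>(i,j). \<lambda>a. bv bs r i a - bv bs r j a) ` {(i,j). i < j \<and> j < sum_list bs} - {\<lambda>a. 0}
    = Dm r \<union> (if length bs = Suc r then Ev r else {})" (is "?L = ?R")
proof (intro set_eqI iffI)
  fix v assume "v \<in> ?L"
  then obtain i j where ij: "i < j" "j < sum_list bs" "v = (\<lambda>a. bv bs r i a - bv bs r j a)" "v \<noteq> (\<lambda>a. 0)"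
    by auto
  have i: "i < sum_list bs" using ij by simp
  have bm: "blk bs i \<le> blk bs j" using blk_mono ij by simp
  have bj: "blk bs j < length bs" using blk_lt ij by simp
  consider "blk bs j < r" | "blk bs i < r" "r \<le> blk bs j" | "r \<le> blk bs i" by linarith
  then show "v \<in> ?R"
  proof cases
    case 1
    then have v: "v = (\<lambda>a. eps (blk bs i) a - eps (blk bs j) a)" using ij bm bv_eq[OF i, of r] bv_eq[of j bs r] by simp
    have "blk bs i \<noteq> blk bs j" using ij(4) v by auto
    then have "v \<in> Dm r" unfolding Dm_def using v bm 1 by auto
    then show ?thesis by simp
  next
    case 2
    then have v: "v = eps (blk bs i)" using ij bv_eq[OF i, of r] bv_eq[of j bs r] by simp
    have "length bs = Suc r" using LL 2 bj by auto
    then show ?thesis using v 2 unfolding Ev_def by auto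
  next
    case 3
    then have "v = (\<lambda>a. 0)" using ij bm bv_eq[OF i, of r] bv_eq[of j bs r] by simp
    then show ?thesis using ij by simp
  qed
next
  fix v assume "v \<in> ?R"
  then consider "v \<in> Dm r" | "length bs = Suc r" "v \<in> Ev r" by (auto split: if_splits)
  then show "v \<in> ?L"
  proof cases
    case 1
    then obtain x y where xy: "x < y" "y < r" "v = (\<lambda>a. eps x a - eps y a)" unfolding Dm_def by auto
    have rl: "r \<le> length bs" using LL by auto
    have "Pb bs x < Pb bs y" using Pb_strict[OF pos xy(1)] xy rl by simp
    moreover have "Pb bs y < sum_list bs" "bv bs r (Pb bs y) = eps y" "bv bs r (Pb bs x) = eps x"
      using bv_Pb(2)[OF pos, of y r] bv_Pb(2)[OF pos, of x r] bv_Pb(1)[OF pos, of y] xy rl by auto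
    moreover have "v \<noteq> (\<lambda>a. 0)"
    proof
      assume "v = (\<lambda>a. 0)" then have "v x = 0" by simp
      then show False using xy by (simp add: eps_def)
    qed
    ultimately show ?thesis using xy
      by (intro DiffI image_eqI[where x="(Pb bs x, Pb bs y)"]) auto
  next
    case 2
    then obtain x where x: "x < r" "v = eps x" unfolding Ev_def by auto
    have "Pb bs x < Pb bs r" using Pb_strict[OF pos x(1)] x 2 by simp
    moreover have "Pb bs r < sum_list bs" "bv bs r (Pb bs r) = (\<lambda>a. 0)" "bv bs r (Pb bs x) = eps x"
      using bv_Pb(2)[OF pos, of r r] bv_Pb(2)[OF pos, of x r] bv_Pb(1)[OF pos, of r] x 2 by auto
    moreover have "v \<noteq> (\<lambda>a. 0)" using x zero_ne_eps by metis
    ultimately show ?thesis using x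
      by (intro DiffI image_eqI[where x="(Pb bs x, Pb bs r)"]) auto
  qed
qed



lemma img_plus:
  assumes pos: "\<forall>x\<in>set bs. 0 < x" and LL: "length bs = r \<or> length bs = Suc r"
  and sr: "s \<le> r" and sz1: "\<And>a. a < s \<Longrightarrow> 2 \<le> bs ! a"
  and sz2: "\<And>a. s \<le> a \<Longrightarrow> a < r \<Longrightarrow> bs ! a = 1"
  shows "(\<lambda>(i,j). \<lambda>a. bv bs r i a + bv bs r j a) ` {(i,j). i < j \<and> j < sum_list bs} - {\<lambda>a. 0}
    = Dp r \<union> Tw s \<union> (if length bs = Suc r then Ev r else {})" (is "?L = ?R")
proof (intro set_eqI iffI)
  fix v assume "v \<in> ?L"
  then obtain i j where ij: "i < j" "j < sum_list bs" "v = (\<lambda>a. bv bs r i a + bv bs r j a)" "v \<noteq> (\<lambda>a. 0)"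
    by auto
  have i: "i < sum_list bs" using ij by simp
  have bm: "blk bs i \<le> blk bs j" using blk_mono ij by simp
  have bj: "blk bs j < length bs" using blk_lt ij by simp
  consider "blk bs i < blk bs j" "blk bs j < r" | "blk bs i = blk bs j" "blk bs j < r"
    | "blk bs i < r" "r \<le> blk bs j" | "r \<le> blk bs i" using bm by linarith
  then show "v \<in> ?R"
  proof cases
    case 1
    then have v: "v = (\<lambda>a. eps (blk bs i) a + eps (blk bs j) a)" using ij bv_eq[OF i, of r] bv_eq[of j bs r] by simp
    then have "v \<in> Dp r" unfolding Dp_def using v 1 by auto
    then show ?thesis by simp
  next
    case 2
    then have v: "v = (\<lambda>a. 2 * eps (blk bs i) a)" using ij bv_eq[OF i, of r] bv_eq[of j bs r] by simp
    have "blk bs i < s"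
    proof (rule ccontr)
      assume "\<not> blk bs i < s"
      then have "bs ! blk bs i = 1" using sz2 2 by simp
      moreover have "blk bs i < length bs" using blk_lt i by simp
      ultimately have "Pb bs (Suc (blk bs i)) = Pb bs (blk bs i) + 1" using Pb_Suc by simp
      moreover have "Pb bs (blk bs i) \<le> i" using blk_props[OF i] by simp
      moreover have "j < Pb bs (Suc (blk bs j))" using blk_props[OF ij(2)] by simp
      ultimately show False using 2 ij(1) by simp
    qed
    then have "v \<in> Tw s" unfolding Tw_def using v by auto
    then show ?thesis by simp
  next
    case 3
    then have v: "v = eps (blk bs i)" using ij bv_eq[OF i, of r] bv_eq[of j bs r] by simp
    have "length bs = Suc r" using LL 3 bj by auto
    then show ?thesis using v 3 unfolding Ev_def by auto
  next
    case 4
    then have "v = (\<lambda>a. 0)" using ij bm bv_eq[OF i, of r] bv_eq[of j bs r] by simp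
    then show ?thesis using ij by simp
  qed
next
  fix v assume "v \<in> ?R"
  then consider "v \<in> Dp r" | "v \<in> Tw s" | "length bs = Suc r" "v \<in> Ev r" by (auto split: if_splits)
  then show "v \<in> ?L"
  proof cases
    case 1
    then obtain x y where xy: "x < y" "y < r" "v = (\<lambda>a. eps x a + eps y a)" unfolding Dp_def by auto
    have rl: "r \<le> length bs" using LL by auto
    have "Pb bs x < Pb bs y" using Pb_strict[OF pos xy(1)] xy rl by simp
    moreover have "Pb bs y < sum_list bs" "bv bs r (Pb bs y) = eps y" "bv bs r (Pb bs x) = eps x"
      using bv_Pb(2)[OF pos, of y r] bv_Pb(2)[OF pos, of x r] bv_Pb(1)[OF pos, of y] xy rl by auto
    moreover have "v \<noteq> (\<lambda>a. 0)"
    proof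
      assume "v = (\<lambda>a. 0)" then have "v x = 0" by simp
      then show False using xy by (simp add: eps_def)
    qed
    ultimately show ?thesis using xy
      by (intro DiffI image_eqI[where x="(Pb bs x, Pb bs y)"]) auto
  next
    case 2
    then obtain x where x: "x < s" "v = (\<lambda>a. 2 * eps x a)" unfolding Tw_def by auto
    have rl: "r \<le> length bs" using LL by auto
    have xl: "x < length bs" using x sr rl by simp
    have s2: "2 \<le> bs ! x" using sz1 x by simp
    have j: "Pb bs x + 1 < Pb bs (Suc x)" using Pb_Suc[OF xl] s2 by simp
    have bj: "blk bs (Pb bs x + 1) = x" by (rule blk_unique) (use xl j in auto)
    have jn: "Pb bs x + 1 < sum_list bs"
      using j Pb_mono[of "Suc x" "length bs" bs] Pb_len[of bs "length bs"] xl by simp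
    have b1: "bv bs r (Pb bs x + 1) = eps x" using bv_eq[OF jn, of r] bj x sr by simp
    have b0: "bv bs r (Pb bs x) = eps x" using bv_Pb(2)[OF pos xl, of r] x sr by simp
    have "v \<noteq> (\<lambda>a. 0)"
    proof
      assume "v = (\<lambda>a. 0)" then have "v x = 0" by simp
      then show False using x by (simp add: eps_def)
    qed
    then show ?thesis using x jn b0 b1
      by (intro DiffI image_eqI[where x="(Pb bs x, Pb bs x + 1)"]) auto
  next
    case 3
    then obtain x where x: "x < r" "v = eps x" unfolding Ev_def by auto
    have "Pb bs x < Pb bs r" using Pb_strict[OF pos x(1)] x 3 by simp
    moreover have "Pb bs r < sum_list bs" "bv bs r (Pb bs r) = (\<lambda>a. 0)" "bv bs r (Pb bs x) = eps x"
      using bv_Pb(2)[OF pos, of r r] bv_Pb(2)[OF pos, of x r] bv_Pb(1)[OF pos, of r] x 3 by auto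
    moreover have "v \<noteq> (\<lambda>a. 0)" using x zero_ne_eps by metis
    ultimately show ?thesis using x
      by (intro DiffI image_eqI[where x="(Pb bs x, Pb bs r)"]) auto
  qed
qed

lemma img_single:
  assumes pos: "\<forall>x\<in>set bs. 0 < x" and rl: "r \<le> length bs"
  shows "bv bs r ` {..<sum_list bs} - {\<lambda>a. 0} = Ev r" (is "?L = ?R")
proof (intro set_eqI iffI)
  fix v assume "v \<in> ?L"
  then obtain i where i: "i < sum_list bs" "v = bv bs r i" "v \<noteq> (\<lambda>a. 0)" by auto
  then have "blk bs i < r" using bv_eq[OF i(1), of r] by (auto split: if_splits)
  then show "v \<in> ?R" using i bv_eq[OF i(1), of r] unfolding Ev_def by auto
next
  fix v assume "v \<in> ?R"
  then obtain x where x: "x < r" "v = eps x" unfolding Ev_def by auto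
  have xl: "x < length bs" using x rl by simp
  show "v \<in> ?L" using bv_Pb(2)[OF pos xl, of r] bv_Pb(1)[OF pos xl] x zero_ne_eps[of x, symmetric]
    by (intro DiffI image_eqI[where x="Pb bs x"]) auto
qed

lemma img_two:
  assumes pos: "\<forall>x\<in>set bs. 0 < x" and rl: "r \<le> length bs"
  shows "(\<lambda>i. \<lambda>a. 2 * bv bs r i a) ` {..<sum_list bs} - {\<lambda>a. 0} = Tw r" (is "?L = ?R")
proof (intro set_eqI iffI)
  fix v assume "v \<in> ?L"
  then obtain i where i: "i < sum_list bs" "v = (\<lambda>a. 2 * bv bs r i a)" "v \<noteq> (\<lambda>a. 0)" by auto
  then have "blk bs i < r" using bv_eq[OF i(1), of r] by (auto split: if_splits)
  then show "v \<in> ?R" using i bv_eq[OF i(1), of r] unfolding Tw_def by auto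
next
  fix v assume "v \<in> ?R"
  then obtain x where x: "x < r" "v = (\<lambda>a. 2 * eps x a)" unfolding Tw_def by auto
  have xl: "x < length bs" using x rl by simp
  have "v \<noteq> (\<lambda>a. 0)"
  proof
    assume "v = (\<lambda>a. 0)" then have "v x = 0" by simp
    then show False using x by (simp add: eps_def)
  qed
  then show "v \<in> ?L" using bv_Pb(2)[OF pos xl, of r] bv_Pb(1)[OF pos xl] x
    by (intro DiffI image_eqI[where x="Pb bs x"]) auto
qed



abbreviation Vm where "Vm bs r \<equiv> (\<lambda>\<alpha>. \<lambda>a. if a < r then pair (sum_list bs) \<alpha> (Hb bs a) else 0)"

lemma pair_eps: "i < n \<Longrightarrow> pair n (eps i) H = H i"
  unfolding pair_def by (rule sum_eps)

lemma pair_sumb: "i < n \<Longrightarrow> j < n \<Longrightarrow> pair n (\<lambda>k. eps i k + b * eps j k) H = H i + b * H j"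
proof -
  assume a: "i < n" "j < n"
  have e: "(\<lambda>k. eps i k + b * eps j k) = (\<lambda>k. 1 * eps i k + b * eps j k)" by simp
  show ?thesis unfolding e pair_eps2[OF a] by simp
qed

lemma pair_2eps: "i < n \<Longrightarrow> pair n (\<lambda>k. 2 * eps i k) H = 2 * H i"
proof -
  assume a: "i < n"
  have e: "(\<lambda>k. 2 * eps i k) = (\<lambda>k. 2 * eps i k + 0 * eps i k)" by simp
  show ?thesis unfolding e pair_eps2[OF a a] by simp
qed

lemma V_diff: "i < sum_list bs \<Longrightarrow> j < sum_list bs \<Longrightarrow>
   Vm bs r (\<lambda>k. eps i k - eps j k) = (\<lambda>a. bv bs r i a - bv bs r j a)"
  by (auto simp: pair_diff bv_def Hb_def)

lemma V_sumb: "i < sum_list bs \<Longrightarrow> j < sum_list bs \<Longrightarrow>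
   Vm bs r (\<lambda>k. eps i k + b * eps j k) = (\<lambda>a. bv bs r i a + b * bv bs r j a)"
  by (auto simp: pair_sumb bv_def Hb_def)

lemma V_eps: "i < sum_list bs \<Longrightarrow> Vm bs r (eps i) = bv bs r i"
  by (auto simp: pair_eps bv_def Hb_def)

lemma V_2eps: "i < sum_list bs \<Longrightarrow> Vm bs r (\<lambda>k. 2 * eps i k) = (\<lambda>a. 2 * bv bs r i a)"
  by (auto simp: pair_2eps bv_def Hb_def)

lemma bv_at: "i < sum_list bs \<Longrightarrow> blk bs i < r \<Longrightarrow> bv bs r i (blk bs i) = 1"
  by (simp add: bv_def)

lemma bv_nonneg: "bv bs r i a \<ge> 0" by (simp add: bv_def)

lemma bv_one: "bv bs r j a = 1 \<Longrightarrow> j < sum_list bs \<and> blk bs j = a \<and> a < r"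
  by (simp add: bv_def split: if_splits)

lemma Zminus_blk:
  assumes LL: "length bs \<le> Suc r" and i: "i < sum_list bs" and j: "j < sum_list bs"
  and z: "(\<lambda>a. bv bs r i a - bv bs r j a) = (\<lambda>a. 0)"
  shows "blk bs i = blk bs j"
proof (cases "blk bs i < r \<or> blk bs j < r")
  case True
  then show ?thesis
  proof
    assume h: "blk bs i < r"
    have "bv bs r i (blk bs i) - bv bs r j (blk bs i) = 0" using fun_cong[OF z, of "blk bs i"] by simp
    then have "bv bs r j (blk bs i) = 1" using bv_at[OF i h] by simp
    then show ?thesis using bv_one by force
  next
    assume h: "blk bs j < r"
    have "bv bs r i (blk bs j) - bv bs r j (blk bs j) = 0" using fun_cong[OF z, of "blk bs j"] by simp
    then have "bv bs r i (blk bs j) = 1" using bv_at[OF j h] by simp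
    then show ?thesis using bv_one by force
  qed
next
  case False
  then show ?thesis using blk_lt[OF i] blk_lt[OF j] LL by simp
qed

lemma Zplus_blk:
  assumes i: "i < sum_list bs" and j: "j < sum_list bs"
  and z: "(\<lambda>a. bv bs r i a + bv bs r j a) = (\<lambda>a. 0)"
  shows "r \<le> blk bs i \<and> r \<le> blk bs j"
proof (rule ccontr)
  assume "\<not> (r \<le> blk bs i \<and> r \<le> blk bs j)"
  then consider "blk bs i < r" | "blk bs j < r" by linarith
  then show False
  proof cases
    case 1
    have "bv bs r i (blk bs i) + bv bs r j (blk bs i) = 0" using fun_cong[OF z, of "blk bs i"] by simp
    then show False using bv_at[OF i 1] bv_nonneg[of bs r j "blk bs i"] by simp
  next
    case 2
    have "bv bs r i (blk bs j) + bv bs r j (blk bs j) = 0" using fun_cong[OF z, of "blk bs j"] by simp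
    then show False using bv_at[OF j 2] bv_nonneg[of bs r i "blk bs j"] by simp
  qed
qed

lemma Zsingle_blk:
  assumes i: "i < sum_list bs" and z: "(\<lambda>a. c * bv bs r i a) = (\<lambda>a. 0)" and c: "c \<noteq> 0"
  shows "r \<le> blk bs i"
proof (rule ccontr)
  assume "\<not> r \<le> blk bs i"
  then have "blk bs i < r" by simp
  moreover have "c * bv bs r i (blk bs i) = 0" using fun_cong[OF z, of "blk bs i"] by simp
  ultimately show False using bv_at[OF i] c by simp
qed

lemma V_zero: "(\<forall>a<r. pair (sum_list bs) \<alpha> (Hb bs a) = 0) \<Longrightarrow> Vm bs r \<alpha> = (\<lambda>a. 0)"
  by auto

lemma posD_eq: "posD n = (\<lambda>(i,j). \<lambda>k. eps i k + eps j k) ` {(i,j). i < j \<and> j < n}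
   \<union> (\<lambda>(i,j). \<lambda>k. eps i k - eps j k) ` {(i,j). i < j \<and> j < n}" (is "_ = ?A \<union> ?B")
proof (intro set_eqI iffI)
  fix \<alpha> assume "\<alpha> \<in> posD n"
  then have "\<exists>i j b. \<alpha> = (\<lambda>k. eps i k + b * eps j k) \<and> i < j \<and> j < n \<and> b \<in> {1, -1}"
    unfolding posD_def by (simp only: mem_Collect_eq)
  then obtain i j b where h: "\<alpha> = (\<lambda>k. eps i k + b * eps j k)" "i < j" "j < n" "b \<in> {1, -1}"
    by (elim exE conjE) simp
  show "\<alpha> \<in> ?A \<union> ?B"
  proof (cases "b = 1")
    case True
    then have "\<alpha> = (\<lambda>(i,j). \<lambda>k. eps i k + eps j k) (i, j)" using h by simp
    moreover have "(i, j) \<in> {(i,j). i < j \<and> j < n}" using h by simp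
    ultimately show ?thesis by (intro UnI1) (rule image_eqI)
  next
    case False
    then have "b = -1" using h by simp
    then have "\<alpha> = (\<lambda>(i,j). \<lambda>k. eps i k - eps j k) (i, j)" using h by simp
    moreover have "(i, j) \<in> {(i,j). i < j \<and> j < n}" using h by simp
    ultimately show ?thesis by (intro UnI2) (rule image_eqI)
  qed
next
  fix \<alpha> assume "\<alpha> \<in> ?A \<union> ?B"
  then consider i j where "i < j" "j < n" "\<alpha> = (\<lambda>k. eps i k + eps j k)"
    | i j where "i < j" "j < n" "\<alpha> = (\<lambda>k. eps i k - eps j k)" by auto
  then show "\<alpha> \<in> posD n"
  proof cases
    case 1
    then have "\<alpha> = (\<lambda>k. eps i k + 1 * eps j k)" by simp
    then show ?thesis unfolding posD_def mem_Collect_eq using 1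
      by (intro exI[of _ i] exI[of _ j] exI[of _ "1::real"]) simp
  next
    case 2
    then have "\<alpha> = (\<lambda>k. eps i k + (-1) * eps j k)" by simp
    then show ?thesis unfolding posD_def mem_Collect_eq using 2
      by (intro exI[of _ i] exI[of _ j] exI[of _ "-1::real"]) simp
  qed
qed

lemma posA_eq: "posA n = (\<lambda>(i,j). \<lambda>k. eps i k - eps j k) ` {(i,j). i < j \<and> j < n}"
proof (intro set_eqI iffI)
  fix \<alpha> assume "\<alpha> \<in> posA n"
  then obtain i j where h: "\<alpha> = (\<lambda>k. eps i k - eps j k)" "i < j" "j < n" unfolding posA_def by blast
  then have "\<alpha> = (\<lambda>(i,j). \<lambda>k. eps i k - eps j k) (i, j)" by simp
  then show "\<alpha> \<in> (\<lambda>(i,j). \<lambda>k. eps i k - eps j k) ` {(i,j). i < j \<and> j < n}" using h by blast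
next
  fix \<alpha> assume "\<alpha> \<in> (\<lambda>(i,j). \<lambda>k. eps i k - eps j k) ` {(i,j). i < j \<and> j < n}"
  then obtain i j where h: "\<alpha> = (\<lambda>k. eps i k - eps j k)" "i < j" "j < n" by auto
  then show "\<alpha> \<in> posA n" unfolding posA_def by blast
qed

lemma Diff_Un2: "(X \<union> Y) - Z = (X - Z) \<union> (Y - Z)" by auto



lemma pair_sum: "i < n \<Longrightarrow> j < n \<Longrightarrow> pair n (\<lambda>k. eps i k + eps j k) H = H i + H j"
  using pair_sumb[of i n j 1 H] by simp

lemma V_sum: "i < sum_list bs \<Longrightarrow> j < sum_list bs \<Longrightarrow>
   Vm bs r (\<lambda>k. eps i k + eps j k) = (\<lambda>a. bv bs r i a + bv bs r j a)"
  by (auto simp: pair_sum bv_def Hb_def)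

lemma posB_eq: "posB n = posD n \<union> eps ` {..<n}"
  unfolding posB_def by auto

lemma posC_eq: "posC n = posD n \<union> (\<lambda>i. \<lambda>k. 2 * eps i k) ` {..<n}"
  unfolding posC_def by auto

lemma img_V_minus:
  "Vm bs r ` ((\<lambda>(i,j). \<lambda>k. eps i k - eps j k) ` {(i,j). i < j \<and> j < sum_list bs})
   = (\<lambda>(i,j). \<lambda>a. bv bs r i a - bv bs r j a) ` {(i,j). i < j \<and> j < sum_list bs}"
  unfolding image_image by (rule image_cong) (auto simp: V_diff)

lemma img_V_plus:
  "Vm bs r ` ((\<lambda>(i,j). \<lambda>k. eps i k + eps j k) ` {(i,j). i < j \<and> j < sum_list bs})
   = (\<lambda>(i,j). \<lambda>a. bv bs r i a + bv bs r j a) ` {(i,j). i < j \<and> j < sum_list bs}"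
  unfolding image_image by (rule image_cong) (auto simp: V_sum)

lemma img_V_single: "Vm bs r ` (eps ` {..<sum_list bs}) = bv bs r ` {..<sum_list bs}"
  unfolding image_image by (rule image_cong) (auto simp: V_eps)

lemma img_V_two: "Vm bs r ` ((\<lambda>i. \<lambda>k. 2 * eps i k) ` {..<sum_list bs}) = (\<lambda>i. \<lambda>a. 2 * bv bs r i a) ` {..<sum_list bs}"
  unfolding image_image by (rule image_cong) (auto simp: V_2eps)

definition EE where "EE bs r = (if length bs = Suc r then Ev r else {})"

lemma VimgA:
  assumes pos: "\<forall>x\<in>set bs. 0 < x" and LL: "length bs = r \<or> length bs = Suc r"
  shows "Vm bs r ` posA (sum_list bs) - {\<lambda>a. 0} = Dm r \<union> EE bs r"
  unfolding posA_eq img_V_minus img_minus[OF pos LL] EE_def ..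

lemma VimgD:
  assumes pos: "\<forall>x\<in>set bs. 0 < x" and LL: "length bs = r \<or> length bs = Suc r"
  and sr: "s \<le> r" and sz1: "\<And>a. a < s \<Longrightarrow> 2 \<le> bs ! a"
  and sz2: "\<And>a. s \<le> a \<Longrightarrow> a < r \<Longrightarrow> bs ! a = 1"
  shows "Vm bs r ` posD (sum_list bs) - {\<lambda>a. 0} = Dm r \<union> Dp r \<union> Tw s \<union> EE bs r"
proof -
  have "Vm bs r ` posD (sum_list bs) - {\<lambda>a. 0} =
     ((\<lambda>(i,j). \<lambda>a. bv bs r i a + bv bs r j a) ` {(i,j). i < j \<and> j < sum_list bs} - {\<lambda>a. 0})
   \<union> ((\<lambda>(i,j). \<lambda>a. bv bs r i a - bv bs r j a) ` {(i,j). i < j \<and> j < sum_list bs} - {\<lambda>a. 0})"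
    unfolding posD_eq image_Un Diff_Un2 img_V_minus img_V_plus ..
  also have "\<dots> = (Dp r \<union> Tw s \<union> (if length bs = Suc r then Ev r else {})) \<union>
       (Dm r \<union> (if length bs = Suc r then Ev r else {}))"
    using img_plus[OF pos LL sr sz1 sz2] img_minus[OF pos LL] by simp
  finally show ?thesis unfolding EE_def by auto
qed

lemma VimgB:
  assumes pos: "\<forall>x\<in>set bs. 0 < x" and LL: "length bs = r \<or> length bs = Suc r"
  and sr: "s \<le> r" and sz1: "\<And>a. a < s \<Longrightarrow> 2 \<le> bs ! a"
  and sz2: "\<And>a. s \<le> a \<Longrightarrow> a < r \<Longrightarrow> bs ! a = 1"
  shows "Vm bs r ` posB (sum_list bs) - {\<lambda>a. 0} = Dm r \<union> Dp r \<union> Tw s \<union> Ev r"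
proof -
  have rl: "r \<le> length bs" using LL by auto
  have "Vm bs r ` posB (sum_list bs) - {\<lambda>a. 0} = (Vm bs r ` posD (sum_list bs) - {\<lambda>a. 0})
     \<union> (Vm bs r ` (eps ` {..<sum_list bs}) - {\<lambda>a. 0})"
    unfolding posB_eq by auto
  also have "\<dots> = (Dm r \<union> Dp r \<union> Tw s \<union> EE bs r) \<union> Ev r"
    using VimgD[OF pos LL sr sz1 sz2] img_V_single img_single[OF pos rl] by simp
  finally show ?thesis unfolding EE_def by auto
qed

lemma VimgC:
  assumes pos: "\<forall>x\<in>set bs. 0 < x" and LL: "length bs = r \<or> length bs = Suc r"
  and sr: "s \<le> r" and sz1: "\<And>a. a < s \<Longrightarrow> 2 \<le> bs ! a"
  and sz2: "\<And>a. s \<le> a \<Longrightarrow> a < r \<Longrightarrow> bs ! a = 1"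
  shows "Vm bs r ` posC (sum_list bs) - {\<lambda>a. 0} = Dm r \<union> Dp r \<union> Tw r \<union> EE bs r"
proof -
  have rl: "r \<le> length bs" using LL by auto
  have t: "Tw s \<subseteq> Tw r" unfolding Tw_def using sr by auto
  have "Vm bs r ` posC (sum_list bs) - {\<lambda>a. 0} = (Vm bs r ` posD (sum_list bs) - {\<lambda>a. 0})
     \<union> (Vm bs r ` ((\<lambda>i. \<lambda>k. 2 * eps i k) ` {..<sum_list bs}) - {\<lambda>a. 0})"
    unfolding posC_eq by auto
  also have "\<dots> = (Dm r \<union> Dp r \<union> Tw s \<union> EE bs r) \<union> Tw r"
    using VimgD[OF pos LL sr sz1 sz2] img_V_two img_two[OF pos rl] by simp
  finally show ?thesis using t by auto
qed

lemma card4: "card (Dm r \<union> Dp r \<union> Tw k \<union> Ev r) = 2 * cp r + k + r"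
proof -
  have "card (Dm r \<union> Dp r) = cp r + cp r"
    using card_Un_disjoint[OF fin_sets(1,2)] disj(1) card_Dm card_Dp by simp
  moreover have "card (Dm r \<union> Dp r \<union> Tw k) = card (Dm r \<union> Dp r) + k"
    using card_Un_disjoint[of "Dm r \<union> Dp r" "Tw k"] fin_sets disj card_Tw by (auto simp: Int_Un_distrib2)
  moreover have "card (Dm r \<union> Dp r \<union> Tw k \<union> Ev r) = card (Dm r \<union> Dp r \<union> Tw k) + r"
    using card_Un_disjoint[of "Dm r \<union> Dp r \<union> Tw k" "Ev r"] fin_sets disj card_Ev by (auto simp: Int_Un_distrib Int_commute)
  ultimately show ?thesis by simp
qed

lemma card3: "card (Dm r \<union> Dp r \<union> Tw k) = 2 * cp r + k"
proof -
  have "card (Dm r \<union> Dp r) = cp r + cp r"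
    using card_Un_disjoint[OF fin_sets(1,2)] disj(1) card_Dm card_Dp by simp
  moreover have "card (Dm r \<union> Dp r \<union> Tw k) = card (Dm r \<union> Dp r) + k"
    using card_Un_disjoint[of "Dm r \<union> Dp r" "Tw k"] fin_sets disj card_Tw by (auto simp: Int_Un_distrib2)
  ultimately show ?thesis by simp
qed

lemma ZD:
  assumes pos: "\<forall>x\<in>set bs. 0 < x" and LL: "length bs \<le> Suc r" and fin: "finite Lr"
  and lastZ: "\<And>i j. i < sum_list bs \<Longrightarrow> j < sum_list bs \<Longrightarrow> r \<le> blk bs i \<Longrightarrow> r \<le> blk bs j \<Longrightarrow>
      (\<lambda>k. eps i k + eps j k) \<in> Zs (bsr bs \<union> Lr)"
  and a: "\<alpha> \<in> posD (sum_list bs)" and z: "\<forall>a<r. pair (sum_list bs) \<alpha> (Hb bs a) = 0"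
  shows "\<alpha> \<in> Zs (bsr bs \<union> Lr)"
proof -
  have z': "Vm bs r \<alpha> = (\<lambda>a. 0)" using V_zero[OF z] .
  from a consider i j where "i < j" "j < sum_list bs" "\<alpha> = (\<lambda>k. eps i k + eps j k)"
    | i j where "i < j" "j < sum_list bs" "\<alpha> = (\<lambda>k. eps i k - eps j k)" unfolding posD_eq by auto
  then show ?thesis
  proof cases
    case 1
    have e: "Vm bs r (\<lambda>k. eps i k + eps j k) = (\<lambda>a. bv bs r i a + bv bs r j a)" using 1 V_sum[of i bs j r] by simp
    have "(\<lambda>a. bv bs r i a + bv bs r j a) = (\<lambda>a. 0)" using z' unfolding 1(3) e .
    then have "r \<le> blk bs i \<and> r \<le> blk bs j" using Zplus_blk[of i bs j r] 1 by simp
    then show ?thesis using lastZ[of i j] 1 by simp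
  next
    case 2
    have e: "Vm bs r (\<lambda>k. eps i k - eps j k) = (\<lambda>a. bv bs r i a - bv bs r j a)" using 2 V_diff[of i bs j r] by simp
    have "(\<lambda>a. bv bs r i a - bv bs r j a) = (\<lambda>a. 0)" using z' unfolding 2(3) e .
    then have "blk bs i = blk bs j" using Zminus_blk[OF LL, of i j] 2 by simp
    then show ?thesis using sb_Zs[OF fin, of i bs j] 2 by simp
  qed
qed

lemma ZA:
  assumes pos: "\<forall>x\<in>set bs. 0 < x" and LL: "length bs \<le> Suc r" and fin: "finite Lr"
  and a: "\<alpha> \<in> posA (sum_list bs)" and z: "\<forall>a<r. pair (sum_list bs) \<alpha> (Hb bs a) = 0"
  shows "\<alpha> \<in> Zs (bsr bs \<union> Lr)"
proof -
  have z': "Vm bs r \<alpha> = (\<lambda>a. 0)" using V_zero[OF z] .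
  from a obtain i j where 2: "i < j" "j < sum_list bs" "\<alpha> = (\<lambda>k. eps i k - eps j k)" unfolding posA_eq by auto
  have e: "Vm bs r (\<lambda>k. eps i k - eps j k) = (\<lambda>a. bv bs r i a - bv bs r j a)" using 2 V_diff[of i bs j r] by simp
  have "(\<lambda>a. bv bs r i a - bv bs r j a) = (\<lambda>a. 0)" using z' unfolding 2(3) e .
  then have "blk bs i = blk bs j" using Zminus_blk[OF LL, of i j] 2 by simp
  then show ?thesis using sb_Zs[OF fin, of i bs j] 2 by simp
qed

lemma ZB:
  assumes pos: "\<forall>x\<in>set bs. 0 < x" and LL: "length bs \<le> Suc r" and fin: "finite Lr"
  and lastZ: "\<And>i j. i < sum_list bs \<Longrightarrow> j < sum_list bs \<Longrightarrow> r \<le> blk bs i \<Longrightarrow> r \<le> blk bs j \<Longrightarrow>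
      (\<lambda>k. eps i k + eps j k) \<in> Zs (bsr bs \<union> Lr)"
  and lastZ1: "\<And>i. i < sum_list bs \<Longrightarrow> r \<le> blk bs i \<Longrightarrow> eps i \<in> Zs (bsr bs \<union> Lr)"
  and a: "\<alpha> \<in> posB (sum_list bs)" and z: "\<forall>a<r. pair (sum_list bs) \<alpha> (Hb bs a) = 0"
  shows "\<alpha> \<in> Zs (bsr bs \<union> Lr)"
proof -
  consider "\<alpha> \<in> posD (sum_list bs)" | i where "i < sum_list bs" "\<alpha> = eps i" using a unfolding posB_eq by auto
  then show ?thesis
  proof cases
    case 1 then show ?thesis using ZD[OF pos LL fin lastZ _ z] by blast
  next
    case 2
    have "Vm bs r \<alpha> = (\<lambda>a. 0)" using V_zero[OF z] .
    then have "bv bs r i = (\<lambda>a. 0)" unfolding 2(2) V_eps[OF 2(1)] .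
    then have "(\<lambda>a. 1 * bv bs r i a) = (\<lambda>a. 0)" by simp
    then have "r \<le> blk bs i" using Zsingle_blk[of i bs 1 r] 2 by simp
    then show ?thesis using lastZ1 2 by simp
  qed
qed

lemma ZC:
  assumes pos: "\<forall>x\<in>set bs. 0 < x" and LL: "length bs \<le> Suc r" and fin: "finite Lr"
  and lastZ: "\<And>i j. i < sum_list bs \<Longrightarrow> j < sum_list bs \<Longrightarrow> r \<le> blk bs i \<Longrightarrow> r \<le> blk bs j \<Longrightarrow>
      (\<lambda>k. eps i k + eps j k) \<in> Zs (bsr bs \<union> Lr)"
  and lastZ2: "\<And>i. i < sum_list bs \<Longrightarrow> r \<le> blk bs i \<Longrightarrow> (\<lambda>k. 2 * eps i k) \<in> Zs (bsr bs \<union> Lr)"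
  and a: "\<alpha> \<in> posC (sum_list bs)" and z: "\<forall>a<r. pair (sum_list bs) \<alpha> (Hb bs a) = 0"
  shows "\<alpha> \<in> Zs (bsr bs \<union> Lr)"
proof -
  consider "\<alpha> \<in> posD (sum_list bs)" | i where "i < sum_list bs" "\<alpha> = (\<lambda>k. 2 * eps i k)" using a unfolding posC_eq by auto
  then show ?thesis
  proof cases
    case 1 then show ?thesis using ZD[OF pos LL fin lastZ _ z] by blast
  next
    case 2
    have "Vm bs r \<alpha> = (\<lambda>a. 0)" using V_zero[OF z] .
    then have "(\<lambda>a. 2 * bv bs r i a) = (\<lambda>a. 0)" unfolding 2(2) V_2eps[OF 2(1)] .
    then have "r \<le> blk bs i" using Zsingle_blk[of i bs 2 r] 2 by simp
    then show ?thesis using lastZ2 2 by simp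
  qed
qed



lemma list_facts:
  assumes ns: "\<forall>x\<in>set ns. 1 < x" and tll: "\<forall>x\<in>set tll. 0 < x"
  shows "\<forall>x\<in>set (ns @ replicate m 1 @ tll). 0 < x"
    "\<And>a. a < length ns \<Longrightarrow> 2 \<le> (ns @ replicate m 1 @ tll) ! a"
    "\<And>a. length ns \<le> a \<Longrightarrow> a < length ns + m \<Longrightarrow> (ns @ replicate m 1 @ tll) ! a = 1"
    "length (ns @ replicate m 1 @ tll) = length ns + m + length tll"
    "sum_list (ns @ replicate m 1 @ tll) = sum_list ns + m + sum_list tll"
proof -
  show "\<forall>x\<in>set (ns @ replicate m 1 @ tll). 0 < x" using ns tll by auto
  show "2 \<le> (ns @ replicate m 1 @ tll) ! a" if "a < length ns" for a
  proof -
    have "ns ! a \<in> set ns" using that by (rule nth_mem)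
    then have "1 < ns ! a" using ns by blast
    then show ?thesis using that by (simp add: nth_append)
  qed
  show "(ns @ replicate m 1 @ tll) ! a = 1" if "length ns \<le> a" "a < length ns + m" for a
  proof -
    have "a - length ns < m" using that by simp
    then show ?thesis using that by (simp add: nth_append)
  qed
  show "length (ns @ replicate m 1 @ tll) = length ns + m + length tll" by simp
  show "sum_list (ns @ replicate m 1 @ tll) = sum_list ns + m + sum_list tll" by (simp add: sum_list_replicate)
qed

lemma nth_last: "(ns @ replicate m 1 @ [t]) ! (length ns + m) = t"
  by (simp add: nth_append)

lemma lastblk:
  assumes pos: "\<forall>x\<in>set bs. 0 < x" and len: "length bs = Suc r" and "Pb bs r \<le> i" "i < sum_list bs"
  shows "blk bs i = r"
  using blk_unique[of r bs i] assms Pb_len[of bs "Suc r"] by simp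

lemma Pb_last: "length bs = Suc r \<Longrightarrow> Pb bs r + bs ! r = sum_list bs"
  using Pb_Suc[of r bs] Pb_len[of bs "Suc r"] by simp

lemma blk_ge:
  assumes len: "length bs = Suc r" and "i < sum_list bs" "r \<le> blk bs i"
  shows "blk bs i = r"
  using blk_lt[OF assms(2)] assms by simp

lemma blk_ge_i:
  assumes len: "length bs = r" and "i < sum_list bs" "r \<le> blk bs i"
  shows False
  using blk_lt[OF assms(2)] assms by simp

lemma rootsD_diff: "i < n \<Longrightarrow> j < n \<Longrightarrow> i \<noteq> j \<Longrightarrow> (\<lambda>k. eps i k - eps j k) \<in> rootsD n"
  unfolding rootsD_def mem_Collect_eq
  by (intro exI[of _ i] exI[of _ j] exI[of _ "1::real"] exI[of _ "-1::real"]) auto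

lemma rootsD_sum: "i < n \<Longrightarrow> j < n \<Longrightarrow> i \<noteq> j \<Longrightarrow> (\<lambda>k. eps i k + eps j k) \<in> rootsD n"
  unfolding rootsD_def mem_Collect_eq
  by (intro exI[of _ i] exI[of _ j] exI[of _ "1::real"] exI[of _ "1::real"]) auto

lemma rootsA_diff: "i < n \<Longrightarrow> j < n \<Longrightarrow> i \<noteq> j \<Longrightarrow> (\<lambda>k. eps i k - eps j k) \<in> rootsA n"
  unfolding rootsA_def by blast

lemma bsr_A: "bsr bs \<subseteq> rootsA (sum_list bs)"
  by (auto dest!: bsr_elem intro!: rootsA_diff)

lemma bsr_D: "bsr bs \<subseteq> rootsD (sum_list bs)"
  by (auto dest!: bsr_elem intro!: rootsD_diff)

lemma DB: "rootsD n \<subseteq> rootsB n" unfolding rootsB_def by auto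
lemma DC: "rootsD n \<subseteq> rootsC n" unfolding rootsC_def by auto

lemma posA_roots: "posA n \<subseteq> rootsA n"
  unfolding posA_eq by (auto intro!: rootsA_diff)

lemma posD_roots: "posD n \<subseteq> rootsD n"
  unfolding posD_eq by (auto intro!: rootsD_diff rootsD_sum)

lemma eps_B: "i < n \<Longrightarrow> eps i \<in> rootsB n"
proof -
  assume i: "i < n"
  have "eps i = (\<lambda>k. 1 * eps i k)" by simp
  then have "eps i \<in> {(\<lambda>k. a * eps i k) | i a. i < n \<and> a \<in> {1, -1}}" unfolding mem_Collect_eq using i
    by (intro exI[of _ i] exI[of _ "1::real"]) simp
  then show ?thesis unfolding rootsB_def by simp
qed

lemma eps2_C: "i < n \<Longrightarrow> (\<lambda>k. 2 * eps i k) \<in> rootsC n"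
proof -
  assume i: "i < n"
  have "(\<lambda>k. 2 * eps i k) = (\<lambda>k. 2 * 1 * eps i k)" by simp
  then have "(\<lambda>k. 2 * eps i k) \<in> {(\<lambda>k. 2 * a * eps i k) | i a. i < n \<and> a \<in> {1, -1}}" unfolding mem_Collect_eq using i
    by (intro exI[of _ i] exI[of _ "1::real"]) simp
  then show ?thesis unfolding rootsC_def by simp
qed

lemma posB_roots: "posB n \<subseteq> rootsB n"
  unfolding posB_eq using posD_roots DB eps_B by blast

lemma posC_roots: "posC n \<subseteq> rootsC n"
  unfolding posC_eq using posD_roots DC eps2_C by blast

lemma forms_D: "\<alpha> \<in> posD n \<Longrightarrow> \<exists>i j c1 c2. i < n \<and> j < n \<and> \<alpha> = (\<lambda>k. c1 * eps i k + c2 * eps j k)"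
  unfolding posD_eq
proof (elim UnE imageE, goal_cases)
  case (1 x) then show ?case by (intro exI[of _ "fst x"] exI[of _ "snd x"] exI[of _ "1::real"] exI[of _ "1::real"]) auto
next
  case (2 x) then show ?case by (intro exI[of _ "fst x"] exI[of _ "snd x"] exI[of _ "1::real"] exI[of _ "-1::real"]) auto
qed

lemma forms_A: "\<alpha> \<in> posA n \<Longrightarrow> \<exists>i j c1 c2. i < n \<and> j < n \<and> \<alpha> = (\<lambda>k. c1 * eps i k + c2 * eps j k)"
  using forms_D[of \<alpha> n] unfolding posA_eq posD_eq by blast

lemma forms_B: "\<alpha> \<in> posB n \<Longrightarrow> \<exists>i j c1 c2. i < n \<and> j < n \<and> \<alpha> = (\<lambda>k. c1 * eps i k + c2 * eps j k)"
  unfolding posB_eq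
proof (elim UnE imageE, goal_cases)
  case 1 then show ?case by (rule forms_D)
next
  case (2 x) then show ?case by (intro exI[of _ x] exI[of _ x] exI[of _ "1::real"] exI[of _ "0::real"]) auto
qed

lemma forms_C: "\<alpha> \<in> posC n \<Longrightarrow> \<exists>i j c1 c2. i < n \<and> j < n \<and> \<alpha> = (\<lambda>k. c1 * eps i k + c2 * eps j k)"
  unfolding posC_eq
proof (elim UnE imageE, goal_cases)
  case 1 then show ?case by (rule forms_D)
next
  case (2 x) then show ?case by (intro exI[of _ x] exI[of _ x] exI[of _ "2::real"] exI[of _ "0::real"]) auto
qed



lemma caseDii:
  assumes t: "4 \<le> t" and n: "sum_list ns + t + m = n" and ns: "\<forall>x\<in>set ns. 1 < x"
  shows "card (pos_t_roots n (rootsD n) (posD n)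
               (block_simple_roots (ns @ replicate m 1 @ [t]) \<union> {lastD n}))
         = (length ns + m)^2 + length ns"
proof -
  define bs where "bs = ns @ replicate m 1 @ [t]"
  define r where "r = length ns + m"
  define s where "s = length ns"
  have tl: "\<forall>x\<in>set [t]. 0 < x" using t by simp
  note lf = list_facts[OF ns tl, where m=m, folded bs_def]
  have pos: "\<forall>x\<in>set bs. 0 < x" using lf(1) .
  have N: "n = sum_list bs" using lf(5) n by simp
  have len: "length bs = Suc r" using lf(4) r_def by simp
  have sz1: "\<And>a. a < s \<Longrightarrow> 2 \<le> bs ! a" using lf(2) s_def by simp
  have sz2: "\<And>a. s \<le> a \<Longrightarrow> a < r \<Longrightarrow> bs ! a = 1" using lf(3) s_def r_def by simp
  have bsr_: "bs ! r = t" by (simp add: bs_def r_def nth_append)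
  have Pbr: "Pb bs r + t = n" using Pb_last[OF len] bsr_ N by simp
  have b1: "blk bs (n - 1) = r" using lastblk[OF pos len, of "n - 1"] Pbr N t by simp
  have b2: "blk bs (n - 2) = r" using lastblk[OF pos len, of "n - 2"] Pbr N t by simp
  have n2: "2 \<le> n" using Pbr t by simp
  have Hb0: "\<And>a k. a < r \<Longrightarrow> blk bs k = r \<Longrightarrow> Hb bs a k = 0" by (auto simp: Hb_def)
  have fin: "finite {lastD n}" by simp
  have lastD_eq: "lastD n = (\<lambda>k. eps (n - 2) k + eps (n - 1) k)" unfolding lastD_def ..
  have "card (pos_t_roots n (rootsD n) (posD n) (bsr bs \<union> {lastD n})) =
     card ((\<lambda>\<alpha>. \<lambda>a. if a < r then pair n \<alpha> (Hb bs a) else 0) ` posD n - {\<lambda>a. 0})"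
  proof (rule master[OF pos N _ fin])
    show "r \<le> length bs" using len by simp
    show "bsr bs \<union> {lastD n} \<subseteq> rootsD n"
      using bsr_D[of bs] N rootsD_sum[of "n - 2" n "n - 1"] n2 lastD_eq by auto
    show "posD n \<subseteq> rootsD n" by (rule posD_roots)
    show "pair n \<beta> (Hb bs a) = 0" if "\<beta> \<in> {lastD n}" "a < r" for \<beta> a
    proof -
      have "Hb bs a (n - 1) = 0" "Hb bs a (n - 2) = 0" using Hb0[OF that(2)] b1 b2 by auto
      then show ?thesis using that n2 by (simp add: lastD_eq pair_sum)
    qed
    show "H i = 0" if H: "\<forall>\<beta>\<in>bsr bs \<union> {lastD n}. pair n \<beta> H = 0" and i: "i < n" "r \<le> blk bs i" for H i
    proof -
      have bi: "blk bs i = r" using blk_ge[OF len] i N by simp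
      have HH: "\<forall>\<beta>\<in>bsr bs \<union> {lastD n}. pair (sum_list bs) \<beta> H = 0" using H N by simp
      have e1: "H i = H (n - 1)" using T_const[OF fin HH, of i "n - 1"] i b1 bi N n2 by simp
      have e2: "H (n - 2) = H (n - 1)" using T_const[OF fin HH, of "n - 2" "n - 1"] b1 b2 N n2 by simp
      have "pair n (lastD n) H = 0" using H by simp
      then have "H (n - 2) + H (n - 1) = 0" using n2 by (simp add: lastD_eq pair_sum)
      then show ?thesis using e1 e2 by simp
    qed
    show "\<exists>i j c1 c2. i < n \<and> j < n \<and> \<alpha> = (\<lambda>k. c1 * eps i k + c2 * eps j k)" if "\<alpha> \<in> posD n" for \<alpha>
      using forms_D that by blast
    show "\<alpha> \<in> Zs (bsr bs \<union> {lastD n})" if a: "\<alpha> \<in> posD n" "\<forall>a<r. pair n \<alpha> (Hb bs a) = 0" for \<alpha>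
    proof (rule ZD[OF pos _ fin])
      show "length bs \<le> Suc r" using len by simp
      show "\<alpha> \<in> posD (sum_list bs)" "\<forall>a<r. pair (sum_list bs) \<alpha> (Hb bs a) = 0" using a N by auto
      show "(\<lambda>k. eps i k + eps j k) \<in> Zs (bsr bs \<union> {lastD n})"
        if ij: "i < sum_list bs" "j < sum_list bs" "r \<le> blk bs i" "r \<le> blk bs j" for i j
      proof -
        have bi: "blk bs i = r" "blk bs j = r" using blk_ge[OF len] ij by auto
        have d1: "(\<lambda>k. eps i k - eps (n - 2) k) \<in> Zs (bsr bs \<union> {lastD n})"
          using sb_Zs[OF fin, of i bs "n - 2"] ij bi b2 N n2 by simp
        have d2: "(\<lambda>k. eps j k - eps (n - 1) k) \<in> Zs (bsr bs \<union> {lastD n})"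
          using sb_Zs[OF fin, of j bs "n - 1"] ij bi b1 N n2 by simp
        have l: "lastD n \<in> Zs (bsr bs \<union> {lastD n})" using Zs_base[of "bsr bs \<union> {lastD n}"] bsr_finite by simp
        have "(\<lambda>k. (eps i k - eps (n - 2) k) + ((eps j k - eps (n - 1) k) + lastD n k)) \<in> Zs (bsr bs \<union> {lastD n})"
          using Zs_add[OF d1 Zs_add[OF d2 l]] by simp
        then show ?thesis by (rule Zs_cong) (simp add: lastD_eq fun_eq_iff)
      qed
    qed
  qed
  also have "\<dots> = card (Dm r \<union> Dp r \<union> Tw s \<union> Ev r)"
  proof -
    have V: "Vm bs r ` posD (sum_list bs) - {\<lambda>a. 0} = Dm r \<union> Dp r \<union> Tw s \<union> EE bs r"
      by (rule VimgD[OF pos _ _ sz1 sz2]) (use len s_def r_def in auto)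
    have E: "EE bs r = Ev r" by (simp add: EE_def len)
    show ?thesis unfolding N using V E by simp
  qed
  also have "\<dots> = 2 * cp r + s + r" by (rule card4)
  also have "\<dots> = r^2 + s" using cp_formula[of r] by (simp add: power2_eq_square)
  finally show ?thesis unfolding bs_def r_def s_def .
qed



lemma caseBii:
  assumes t: "2 \<le> t" and n: "sum_list ns + t + m = n" and ns: "\<forall>x\<in>set ns. 1 < x"
  shows "card (pos_t_roots n (rootsB n) (posB n)
               (block_simple_roots (ns @ replicate m 1 @ [t]) \<union> {lastB n}))
         = (length ns + m)^2 + length ns"
proof -
  define bs where "bs = ns @ replicate m 1 @ [t]"
  define r where "r = length ns + m"
  define s where "s = length ns"
  have tl: "\<forall>x\<in>set [t]. 0 < x" using t by simp
  note lf = list_facts[OF ns tl, where m=m, folded bs_def]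
  have pos: "\<forall>x\<in>set bs. 0 < x" using lf(1) .
  have N: "n = sum_list bs" using lf(5) n by simp
  have len: "length bs = Suc r" using lf(4) r_def by simp
  have sz1: "\<And>a. a < s \<Longrightarrow> 2 \<le> bs ! a" using lf(2) s_def by simp
  have sz2: "\<And>a. s \<le> a \<Longrightarrow> a < r \<Longrightarrow> bs ! a = 1" using lf(3) s_def r_def by simp
  have bsr_: "bs ! r = t" by (simp add: bs_def r_def nth_append)
  have Pbr: "Pb bs r + t = n" using Pb_last[OF len] bsr_ N by simp
  have b1: "blk bs (n - 1) = r" using lastblk[OF pos len, of "n - 1"] Pbr N t by simp
  have n2: "1 \<le> n" using Pbr t by simp
  have Hb0: "\<And>a k. a < r \<Longrightarrow> blk bs k = r \<Longrightarrow> Hb bs a k = 0" by (auto simp: Hb_def)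
  have fin: "finite {lastB n}" by simp
  have last_eq: "lastB n = eps (n - 1)" unfolding lastB_def ..
  have "card (pos_t_roots n (rootsB n) (posB n) (bsr bs \<union> {lastB n})) =
     card ((\<lambda>\<alpha>. \<lambda>a. if a < r then pair n \<alpha> (Hb bs a) else 0) ` posB n - {\<lambda>a. 0})"
  proof (rule master[OF pos N _ fin])
    show "r \<le> length bs" using len by simp
    show "bsr bs \<union> {lastB n} \<subseteq> rootsB n"
      using bsr_D[of bs] DB[of n] N eps_B[of "n - 1" n] n2 last_eq by auto
    show "posB n \<subseteq> rootsB n" by (rule posB_roots)
    show "pair n \<beta> (Hb bs a) = 0" if "\<beta> \<in> {lastB n}" "a < r" for \<beta> a
    proof -
      have "Hb bs a (n - 1) = 0" using Hb0[OF that(2)] b1 by auto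
      then show ?thesis using that n2 by (simp add: last_eq pair_eps)
    qed
    show "H i = 0" if H: "\<forall>\<beta>\<in>bsr bs \<union> {lastB n}. pair n \<beta> H = 0" and i: "i < n" "r \<le> blk bs i" for H i
    proof -
      have bi: "blk bs i = r" using blk_ge[OF len] i N by simp
      have HH: "\<forall>\<beta>\<in>bsr bs \<union> {lastB n}. pair (sum_list bs) \<beta> H = 0" using H N by simp
      have e1: "H i = H (n - 1)" using T_const[OF fin HH, of i "n - 1"] i b1 bi N n2 by simp
      have "pair n (lastB n) H = 0" using H by simp
      then have "H (n - 1) = 0" using n2 by (simp add: last_eq pair_eps)
      then show ?thesis using e1 by simp
    qed
    show "\<exists>i j c1 c2. i < n \<and> j < n \<and> \<alpha> = (\<lambda>k. c1 * eps i k + c2 * eps j k)" if "\<alpha> \<in> posB n" for \<alpha>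
      using forms_B that by blast
    have l: "lastB n \<in> Zs (bsr bs \<union> {lastB n})" using Zs_base[of "bsr bs \<union> {lastB n}"] bsr_finite by simp
    have d: "(\<lambda>k. eps i k - eps (n - 1) k) \<in> Zs (bsr bs \<union> {lastB n})"
      if "i < sum_list bs" "r \<le> blk bs i" for i
      using sb_Zs[OF fin, of i bs "n - 1"] that blk_ge[OF len that] b1 N n2 by simp
    show "\<alpha> \<in> Zs (bsr bs \<union> {lastB n})" if a: "\<alpha> \<in> posB n" "\<forall>a<r. pair n \<alpha> (Hb bs a) = 0" for \<alpha>
    proof (rule ZB[OF pos _ fin])
      show "length bs \<le> Suc r" using len by simp
      show "\<alpha> \<in> posB (sum_list bs)" "\<forall>a<r. pair (sum_list bs) \<alpha> (Hb bs a) = 0" using a N by auto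
      show "(\<lambda>k. eps i k + eps j k) \<in> Zs (bsr bs \<union> {lastB n})"
        if ij: "i < sum_list bs" "j < sum_list bs" "r \<le> blk bs i" "r \<le> blk bs j" for i j
      proof -
        have "(\<lambda>k. (eps i k - eps (n - 1) k) + ((eps j k - eps (n - 1) k) + (lastB n k + lastB n k))) \<in> Zs (bsr bs \<union> {lastB n})"
          using Zs_add[OF d[OF ij(1,3)] Zs_add[OF d[OF ij(2,4)] Zs_add[OF l l]]] by simp
        then show ?thesis by (rule Zs_cong) (simp add: last_eq fun_eq_iff)
      qed
      show "eps i \<in> Zs (bsr bs \<union> {lastB n})" if ij: "i < sum_list bs" "r \<le> blk bs i" for i
      proof -
        have "(\<lambda>k. (eps i k - eps (n - 1) k) + lastB n k) \<in> Zs (bsr bs \<union> {lastB n})"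
          using Zs_add[OF d[OF ij] l] by simp
        then show ?thesis by (rule Zs_cong) (simp add: last_eq fun_eq_iff)
      qed
    qed
  qed
  also have "\<dots> = card (Dm r \<union> Dp r \<union> Tw s \<union> Ev r)"
  proof -
    have V: "Vm bs r ` posB (sum_list bs) - {\<lambda>a. 0} = Dm r \<union> Dp r \<union> Tw s \<union> Ev r"
      by (rule VimgB[OF pos _ _ sz1 sz2]) (use len s_def r_def in auto)
    show ?thesis unfolding N using V by simp
  qed
  also have "\<dots> = 2 * cp r + s + r" by (rule card4)
  also have "\<dots> = r^2 + s" using cp_formula[of r] by (simp add: power2_eq_square)
  finally show ?thesis unfolding bs_def r_def s_def .
qed

lemma caseCii:
  assumes t: "3 \<le> t" and n: "sum_list ns + t + m = n" and ns: "\<forall>x\<in>set ns. 1 < x"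
  shows "card (pos_t_roots n (rootsC n) (posC n)
               (block_simple_roots (ns @ replicate m 1 @ [t]) \<union> {lastC n}))
         = (length ns + m)^2 + (length ns + m)"
proof -
  define bs where "bs = ns @ replicate m 1 @ [t]"
  define r where "r = length ns + m"
  define s where "s = length ns"
  have tl: "\<forall>x\<in>set [t]. 0 < x" using t by simp
  note lf = list_facts[OF ns tl, where m=m, folded bs_def]
  have pos: "\<forall>x\<in>set bs. 0 < x" using lf(1) .
  have N: "n = sum_list bs" using lf(5) n by simp
  have len: "length bs = Suc r" using lf(4) r_def by simp
  have sz1: "\<And>a. a < s \<Longrightarrow> 2 \<le> bs ! a" using lf(2) s_def by simp
  have sz2: "\<And>a. s \<le> a \<Longrightarrow> a < r \<Longrightarrow> bs ! a = 1" using lf(3) s_def r_def by simp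
  have bsr_: "bs ! r = t" by (simp add: bs_def r_def nth_append)
  have Pbr: "Pb bs r + t = n" using Pb_last[OF len] bsr_ N by simp
  have b1: "blk bs (n - 1) = r" using lastblk[OF pos len, of "n - 1"] Pbr N t by simp
  have n2: "1 \<le> n" using Pbr t by simp
  have Hb0: "\<And>a k. a < r \<Longrightarrow> blk bs k = r \<Longrightarrow> Hb bs a k = 0" by (auto simp: Hb_def)
  have fin: "finite {lastC n}" by simp
  have last_eq: "lastC n = (\<lambda>k. 2 * eps (n - 1) k)" unfolding lastC_def ..
  have "card (pos_t_roots n (rootsC n) (posC n) (bsr bs \<union> {lastC n})) =
     card ((\<lambda>\<alpha>. \<lambda>a. if a < r then pair n \<alpha> (Hb bs a) else 0) ` posC n - {\<lambda>a. 0})"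
  proof (rule master[OF pos N _ fin])
    show "r \<le> length bs" using len by simp
    show "bsr bs \<union> {lastC n} \<subseteq> rootsC n"
      using bsr_D[of bs] DC[of n] N eps2_C[of "n - 1" n] n2 last_eq by auto
    show "posC n \<subseteq> rootsC n" by (rule posC_roots)
    show "pair n \<beta> (Hb bs a) = 0" if "\<beta> \<in> {lastC n}" "a < r" for \<beta> a
    proof -
      have "Hb bs a (n - 1) = 0" using Hb0[OF that(2)] b1 by auto
      then show ?thesis using that n2 by (simp add: last_eq pair_2eps)
    qed
    show "H i = 0" if H: "\<forall>\<beta>\<in>bsr bs \<union> {lastC n}. pair n \<beta> H = 0" and i: "i < n" "r \<le> blk bs i" for H i
    proof -
      have bi: "blk bs i = r" using blk_ge[OF len] i N by simp
      have HH: "\<forall>\<beta>\<in>bsr bs \<union> {lastC n}. pair (sum_list bs) \<beta> H = 0" using H N by simp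
      have e1: "H i = H (n - 1)" using T_const[OF fin HH, of i "n - 1"] i b1 bi N n2 by simp
      have "pair n (lastC n) H = 0" using H by simp
      then have "H (n - 1) = 0" using n2 by (simp add: last_eq pair_2eps)
      then show ?thesis using e1 by simp
    qed
    show "\<exists>i j c1 c2. i < n \<and> j < n \<and> \<alpha> = (\<lambda>k. c1 * eps i k + c2 * eps j k)" if "\<alpha> \<in> posC n" for \<alpha>
      using forms_C that by blast
    have l: "lastC n \<in> Zs (bsr bs \<union> {lastC n})" using Zs_base[of "bsr bs \<union> {lastC n}"] bsr_finite by simp
    have d: "(\<lambda>k. eps i k - eps (n - 1) k) \<in> Zs (bsr bs \<union> {lastC n})"
      if "i < sum_list bs" "r \<le> blk bs i" for i
      using sb_Zs[OF fin, of i bs "n - 1"] that blk_ge[OF len that] b1 N n2 by simp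
    show "\<alpha> \<in> Zs (bsr bs \<union> {lastC n})" if a: "\<alpha> \<in> posC n" "\<forall>a<r. pair n \<alpha> (Hb bs a) = 0" for \<alpha>
    proof (rule ZC[OF pos _ fin])
      show "length bs \<le> Suc r" using len by simp
      show "\<alpha> \<in> posC (sum_list bs)" "\<forall>a<r. pair (sum_list bs) \<alpha> (Hb bs a) = 0" using a N by auto
      show "(\<lambda>k. eps i k + eps j k) \<in> Zs (bsr bs \<union> {lastC n})"
        if ij: "i < sum_list bs" "j < sum_list bs" "r \<le> blk bs i" "r \<le> blk bs j" for i j
      proof -
        have "(\<lambda>k. (eps i k - eps (n - 1) k) + ((eps j k - eps (n - 1) k) + lastC n k)) \<in> Zs (bsr bs \<union> {lastC n})"
          using Zs_add[OF d[OF ij(1,3)] Zs_add[OF d[OF ij(2,4)] l]] by simp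
        then show ?thesis by (rule Zs_cong) (simp add: last_eq fun_eq_iff)
      qed
      show "(\<lambda>k. 2 * eps i k) \<in> Zs (bsr bs \<union> {lastC n})" if ij: "i < sum_list bs" "r \<le> blk bs i" for i
      proof -
        have "(\<lambda>k. (eps i k - eps (n - 1) k) + ((eps i k - eps (n - 1) k) + lastC n k)) \<in> Zs (bsr bs \<union> {lastC n})"
          using Zs_add[OF d[OF ij] Zs_add[OF d[OF ij] l]] by simp
        then show ?thesis by (rule Zs_cong) (simp add: last_eq fun_eq_iff)
      qed
    qed
  qed
  also have "\<dots> = card (Dm r \<union> Dp r \<union> Tw r \<union> Ev r)"
  proof -
    have V: "Vm bs r ` posC (sum_list bs) - {\<lambda>a. 0} = Dm r \<union> Dp r \<union> Tw r \<union> EE bs r"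
      by (rule VimgC[OF pos _ _ sz1 sz2]) (use len s_def r_def in auto)
    have E: "EE bs r = Ev r" by (simp add: EE_def len)
    show ?thesis unfolding N using V E by simp
  qed
  also have "\<dots> = 2 * cp r + r + r" by (rule card4)
  also have "\<dots> = r^2 + r" using cp_formula[of r] by (simp add: power2_eq_square)
  finally show ?thesis unfolding bs_def r_def s_def .
qed



lemma list_facts0:
  assumes ns: "\<forall>x\<in>set ns. 1 < x"
  shows "\<forall>x\<in>set (ns @ replicate m 1). 0 < x"
    "\<And>a. a < length ns \<Longrightarrow> 2 \<le> (ns @ replicate m 1) ! a"
    "\<And>a. length ns \<le> a \<Longrightarrow> a < length ns + m \<Longrightarrow> (ns @ replicate m 1) ! a = 1"
    "length (ns @ replicate m 1) = length ns + m"
    "sum_list (ns @ replicate m 1) = sum_list ns + m"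
proof -
  have tl: "\<forall>x\<in>set ([]::nat list). 0 < x" by simp
  note lf = list_facts[OF ns tl, where m=m, unfolded append.right_neutral list.size(3) sum_list.Nil add_0_right]
  show "\<forall>x\<in>set (ns @ replicate m 1). 0 < x" by (rule lf(1))
  show "2 \<le> (ns @ replicate m 1) ! a" if "a < length ns" for a by (rule lf(2)[OF that])
  show "(ns @ replicate m 1) ! a = 1" if "length ns \<le> a" "a < length ns + m" for a by (rule lf(3)[OF that])
  show "length (ns @ replicate m 1) = length ns + m" by (rule lf(4))
  show "sum_list (ns @ replicate m 1) = sum_list ns + m" by (rule lf(5))
qed

lemma caseDi:
  assumes n: "sum_list ns + m = n" and ns: "\<forall>x\<in>set ns. 1 < x"
  shows "card (pos_t_roots n (rootsD n) (posD n) (block_simple_roots (ns @ replicate m 1)))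
         = (length ns + m)^2 - m"
proof -
  define bs where "bs = ns @ replicate m 1"
  define r where "r = length ns + m"
  define s where "s = length ns"
  note lf = list_facts0[OF ns, where m=m, folded bs_def]
  have pos: "\<forall>x\<in>set bs. 0 < x" using lf(1) .
  have N: "n = sum_list bs" using lf(5) n by simp
  have len: "length bs = r" using lf(4) r_def by simp
  have sz1: "\<And>a. a < s \<Longrightarrow> 2 \<le> bs ! a" using lf(2) s_def by simp
  have sz2: "\<And>a. s \<le> a \<Longrightarrow> a < r \<Longrightarrow> bs ! a = 1" using lf(3) s_def r_def by simp
  have fin: "finite ({}::(nat \<Rightarrow> real) set)" by simp
  have "card (pos_t_roots n (rootsD n) (posD n) (bsr bs)) = card (pos_t_roots n (rootsD n) (posD n) (bsr bs \<union> {}))"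
    by (simp only: Un_empty_right)
  also have "\<dots> =
     card ((\<lambda>\<alpha>. \<lambda>a. if a < r then pair n \<alpha> (Hb bs a) else 0) ` posD n - {\<lambda>a. 0})"
  proof (rule master[OF pos N _ fin])
    show "r \<le> length bs" using len by simp
    show "bsr bs \<union> {} \<subseteq> rootsD n" using bsr_D[of bs] N by auto
    show "posD n \<subseteq> rootsD n" by (rule posD_roots)
    show "pair n \<beta> (Hb bs a) = 0" if "\<beta> \<in> {}" "a < r" for \<beta> a using that by simp
    show "(H::nat \<Rightarrow> real) i = 0" if "i < n" "r \<le> blk bs i" for H i using blk_ge_i[OF len, of i] that N by simp
    show "\<exists>i j c1 c2. i < n \<and> j < n \<and> \<alpha> = (\<lambda>k. c1 * eps i k + c2 * eps j k)" if "\<alpha> \<in> posD n" for \<alpha>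
      using forms_D that by blast
    show "\<alpha> \<in> Zs (bsr bs \<union> {})" if a: "\<alpha> \<in> posD n" "\<forall>a<r. pair n \<alpha> (Hb bs a) = 0" for \<alpha>
    proof (rule ZD[OF pos _ fin])
      show "length bs \<le> Suc r" using len by simp
      show "\<alpha> \<in> posD (sum_list bs)" "\<forall>a<r. pair (sum_list bs) \<alpha> (Hb bs a) = 0" using a N by auto
      show "(\<lambda>k. eps i k + eps j k) \<in> Zs (bsr bs \<union> {})"
        if ij: "i < sum_list bs" "j < sum_list bs" "r \<le> blk bs i" "r \<le> blk bs j" for i j
        using blk_ge_i[OF len ij(1,3)] by simp
    qed
  qed
  also have "\<dots> = card (Dm r \<union> Dp r \<union> Tw s)"
  proof -
    have V: "Vm bs r ` posD (sum_list bs) - {\<lambda>a. 0} = Dm r \<union> Dp r \<union> Tw s \<union> EE bs r"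
      by (rule VimgD[OF pos _ _ sz1 sz2]) (use len s_def r_def in auto)
    have E: "EE bs r = {}" by (simp add: EE_def len)
    show ?thesis unfolding N using V E by simp
  qed
  also have "\<dots> = 2 * cp r + s" by (rule card3)
  also have "\<dots> = r^2 - m" using cp_formula[of r] r_def s_def by (simp add: power2_eq_square)
  finally show ?thesis unfolding bs_def r_def s_def .
qed

lemma caseBi:
  assumes n: "sum_list ns + m = n" and ns: "\<forall>x\<in>set ns. 1 < x"
  shows "card (pos_t_roots n (rootsB n) (posB n) (block_simple_roots (ns @ replicate m 1)))
         = (length ns + m)^2 + length ns"
proof -
  define bs where "bs = ns @ replicate m 1"
  define r where "r = length ns + m"
  define s where "s = length ns"
  note lf = list_facts0[OF ns, where m=m, folded bs_def]
  have pos: "\<forall>x\<in>set bs. 0 < x" using lf(1) .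
  have N: "n = sum_list bs" using lf(5) n by simp
  have len: "length bs = r" using lf(4) r_def by simp
  have sz1: "\<And>a. a < s \<Longrightarrow> 2 \<le> bs ! a" using lf(2) s_def by simp
  have sz2: "\<And>a. s \<le> a \<Longrightarrow> a < r \<Longrightarrow> bs ! a = 1" using lf(3) s_def r_def by simp
  have fin: "finite ({}::(nat \<Rightarrow> real) set)" by simp
  have "card (pos_t_roots n (rootsB n) (posB n) (bsr bs)) = card (pos_t_roots n (rootsB n) (posB n) (bsr bs \<union> {}))"
    by (simp only: Un_empty_right)
  also have "\<dots> =
     card ((\<lambda>\<alpha>. \<lambda>a. if a < r then pair n \<alpha> (Hb bs a) else 0) ` posB n - {\<lambda>a. 0})"
  proof (rule master[OF pos N _ fin])
    show "r \<le> length bs" using len by simp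
    show "bsr bs \<union> {} \<subseteq> rootsB n" using bsr_D[of bs] DB[of n] N by auto
    show "posB n \<subseteq> rootsB n" by (rule posB_roots)
    show "pair n \<beta> (Hb bs a) = 0" if "\<beta> \<in> {}" "a < r" for \<beta> a using that by simp
    show "(H::nat \<Rightarrow> real) i = 0" if "i < n" "r \<le> blk bs i" for H i using blk_ge_i[OF len, of i] that N by simp
    show "\<exists>i j c1 c2. i < n \<and> j < n \<and> \<alpha> = (\<lambda>k. c1 * eps i k + c2 * eps j k)" if "\<alpha> \<in> posB n" for \<alpha>
      using forms_B that by blast
    show "\<alpha> \<in> Zs (bsr bs \<union> {})" if a: "\<alpha> \<in> posB n" "\<forall>a<r. pair n \<alpha> (Hb bs a) = 0" for \<alpha>
    proof (rule ZB[OF pos _ fin])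
      show "length bs \<le> Suc r" using len by simp
      show "\<alpha> \<in> posB (sum_list bs)" "\<forall>a<r. pair (sum_list bs) \<alpha> (Hb bs a) = 0" using a N by auto
      show "(\<lambda>k. eps i k + eps j k) \<in> Zs (bsr bs \<union> {})"
        if ij: "i < sum_list bs" "j < sum_list bs" "r \<le> blk bs i" "r \<le> blk bs j" for i j
        using blk_ge_i[OF len ij(1,3)] by simp
      show "eps i \<in> Zs (bsr bs \<union> {})" if ij: "i < sum_list bs" "r \<le> blk bs i" for i
        using blk_ge_i[OF len ij] by simp
    qed
  qed
  also have "\<dots> = card (Dm r \<union> Dp r \<union> Tw s \<union> Ev r)"
  proof -
    have V: "Vm bs r ` posB (sum_list bs) - {\<lambda>a. 0} = Dm r \<union> Dp r \<union> Tw s \<union> Ev r"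
      by (rule VimgB[OF pos _ _ sz1 sz2]) (use len s_def r_def in auto)
    show ?thesis unfolding N using V by simp
  qed
  also have "\<dots> = 2 * cp r + s + r" by (rule card4)
  also have "\<dots> = r^2 + s" using cp_formula[of r] by (simp add: power2_eq_square)
  finally show ?thesis unfolding bs_def r_def s_def .
qed

lemma caseCi:
  assumes n: "sum_list ns + m = n" and ns: "\<forall>x\<in>set ns. 1 < x"
  shows "card (pos_t_roots n (rootsC n) (posC n) (block_simple_roots (ns @ replicate m 1)))
         = (length ns + m)^2"
proof -
  define bs where "bs = ns @ replicate m 1"
  define r where "r = length ns + m"
  define s where "s = length ns"
  note lf = list_facts0[OF ns, where m=m, folded bs_def]
  have pos: "\<forall>x\<in>set bs. 0 < x" using lf(1) .
  have N: "n = sum_list bs" using lf(5) n by simp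
  have len: "length bs = r" using lf(4) r_def by simp
  have sz1: "\<And>a. a < s \<Longrightarrow> 2 \<le> bs ! a" using lf(2) s_def by simp
  have sz2: "\<And>a. s \<le> a \<Longrightarrow> a < r \<Longrightarrow> bs ! a = 1" using lf(3) s_def r_def by simp
  have fin: "finite ({}::(nat \<Rightarrow> real) set)" by simp
  have "card (pos_t_roots n (rootsC n) (posC n) (bsr bs)) = card (pos_t_roots n (rootsC n) (posC n) (bsr bs \<union> {}))"
    by (simp only: Un_empty_right)
  also have "\<dots> =
     card ((\<lambda>\<alpha>. \<lambda>a. if a < r then pair n \<alpha> (Hb bs a) else 0) ` posC n - {\<lambda>a. 0})"
  proof (rule master[OF pos N _ fin])
    show "r \<le> length bs" using len by simp
    show "bsr bs \<union> {} \<subseteq> rootsC n" using bsr_D[of bs] DC[of n] N by auto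
    show "posC n \<subseteq> rootsC n" by (rule posC_roots)
    show "pair n \<beta> (Hb bs a) = 0" if "\<beta> \<in> {}" "a < r" for \<beta> a using that by simp
    show "(H::nat \<Rightarrow> real) i = 0" if "i < n" "r \<le> blk bs i" for H i using blk_ge_i[OF len, of i] that N by simp
    show "\<exists>i j c1 c2. i < n \<and> j < n \<and> \<alpha> = (\<lambda>k. c1 * eps i k + c2 * eps j k)" if "\<alpha> \<in> posC n" for \<alpha>
      using forms_C that by blast
    show "\<alpha> \<in> Zs (bsr bs \<union> {})" if a: "\<alpha> \<in> posC n" "\<forall>a<r. pair n \<alpha> (Hb bs a) = 0" for \<alpha>
    proof (rule ZC[OF pos _ fin])
      show "length bs \<le> Suc r" using len by simp
      show "\<alpha> \<in> posC (sum_list bs)" "\<forall>a<r. pair (sum_list bs) \<alpha> (Hb bs a) = 0" using a N by auto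
      show "(\<lambda>k. eps i k + eps j k) \<in> Zs (bsr bs \<union> {})"
        if ij: "i < sum_list bs" "j < sum_list bs" "r \<le> blk bs i" "r \<le> blk bs j" for i j
        using blk_ge_i[OF len ij(1,3)] by simp
      show "(\<lambda>k. 2 * eps i k) \<in> Zs (bsr bs \<union> {})" if ij: "i < sum_list bs" "r \<le> blk bs i" for i
        using blk_ge_i[OF len ij] by simp
    qed
  qed
  also have "\<dots> = card (Dm r \<union> Dp r \<union> Tw r)"
  proof -
    have V: "Vm bs r ` posC (sum_list bs) - {\<lambda>a. 0} = Dm r \<union> Dp r \<union> Tw r \<union> EE bs r"
      by (rule VimgC[OF pos _ _ sz1 sz2]) (use len s_def r_def in auto)
    have E: "EE bs r = {}" by (simp add: EE_def len)
    show ?thesis unfolding N using V E by simp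
  qed
  also have "\<dots> = 2 * cp r + r" by (rule card3)
  also have "\<dots> = r^2" using cp_formula[of r] by (simp add: power2_eq_square)
  finally show ?thesis unfolding bs_def r_def s_def .
qed

lemma caseA:
  assumes n: "n = sum_list ns" and ns: "\<forall>x\<in>set ns. x \<ge> 1"
  shows "card (pos_t_roots n (rootsA n) (posA n) (block_simple_roots ns))
         = length ns * (length ns - 1) div 2"
proof -
  define bs where "bs = ns"
  define r where "r = length ns"
  have pos: "\<forall>x\<in>set bs. 0 < x" using ns bs_def by auto
  have N: "n = sum_list bs" using n bs_def by simp
  have len: "length bs = r" using r_def bs_def by simp
  have fin: "finite ({}::(nat \<Rightarrow> real) set)" by simp
  have "card (pos_t_roots n (rootsA n) (posA n) (bsr bs)) = card (pos_t_roots n (rootsA n) (posA n) (bsr bs \<union> {}))"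
    by (simp only: Un_empty_right)
  also have "\<dots> =
     card ((\<lambda>\<alpha>. \<lambda>a. if a < r then pair n \<alpha> (Hb bs a) else 0) ` posA n - {\<lambda>a. 0})"
  proof (rule master[OF pos N _ fin])
    show "r \<le> length bs" using len by simp
    show "bsr bs \<union> {} \<subseteq> rootsA n" using bsr_A[of bs] N by auto
    show "posA n \<subseteq> rootsA n" by (rule posA_roots)
    show "pair n \<beta> (Hb bs a) = 0" if "\<beta> \<in> {}" "a < r" for \<beta> a using that by simp
    show "(H::nat \<Rightarrow> real) i = 0" if "i < n" "r \<le> blk bs i" for H i using blk_ge_i[OF len, of i] that N by simp
    show "\<exists>i j c1 c2. i < n \<and> j < n \<and> \<alpha> = (\<lambda>k. c1 * eps i k + c2 * eps j k)" if "\<alpha> \<in> posA n" for \<alpha>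
      using forms_A that by blast
    show "\<alpha> \<in> Zs (bsr bs \<union> {})" if a: "\<alpha> \<in> posA n" "\<forall>a<r. pair n \<alpha> (Hb bs a) = 0" for \<alpha>
      by (rule ZA[OF pos _ fin]) (use a N len in auto)
  qed
  also have "\<dots> = card (Dm r)"
  proof -
    have V: "Vm bs r ` posA (sum_list bs) - {\<lambda>a. 0} = Dm r \<union> EE bs r"
      by (rule VimgA[OF pos]) (use len in auto)
    have E: "EE bs r = {}" by (simp add: EE_def len)
    show ?thesis unfolding N using V E by simp
  qed
  also have "\<dots> = cp r" by (rule card_Dm)
  also have "\<dots> = r * (r - 1) div 2"
  proof -
    have "2 * cp r + r = r * r" by (rule cp_formula)
    then have "r * (r - 1) = 2 * cp r" by (simp add: diff_mult_distrib2)
    then show ?thesis by simp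
  qed
  finally show ?thesis unfolding bs_def r_def .
qed

theorem theorem3p1:
  shows
   \<comment> \<open>(A) SU(n)/S(U(n_1) x ... x U(n_s))\<close>
   "(\<forall>ns n. n = sum_list ns \<and> (\<forall>x\<in>set ns. x \<ge> 1) \<longrightarrow>
       card (pos_t_roots n (rootsA n) (posA n) (block_simple_roots ns))
         = length ns * (length ns - 1) div 2)
   \<and> \<comment> \<open>(B i)\<close>
   (\<forall>ns m n. n \<ge> 2 \<and> sum_list ns + m = n \<and> (\<forall>x\<in>set ns. x > 1) \<longrightarrow>
       card (pos_t_roots n (rootsB n) (posB n) (block_simple_roots (ns @ replicate m 1)))
         = (length ns + m)^2 + length ns)
   \<and> \<comment> \<open>(B ii)\<close>
   (\<forall>ns m t n. t \<ge> 2 \<and> sum_list ns + t + m = n \<and> (\<forall>x\<in>set ns. x > 1) \<longrightarrow>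
       card (pos_t_roots n (rootsB n) (posB n)
               (block_simple_roots (ns @ replicate m 1 @ [t]) \<union> {lastB n}))
         = (length ns + m)^2 + length ns)
   \<and> \<comment> \<open>(C i)\<close>
   (\<forall>ns m n. n \<ge> 3 \<and> sum_list ns + m = n \<and> (\<forall>x\<in>set ns. x > 1) \<longrightarrow>
       card (pos_t_roots n (rootsC n) (posC n) (block_simple_roots (ns @ replicate m 1)))
         = (length ns + m)^2)
   \<and> \<comment> \<open>(C ii)\<close>
   (\<forall>ns m t n. t \<ge> 3 \<and> sum_list ns + t + m = n \<and> (\<forall>x\<in>set ns. x > 1) \<longrightarrow>
       card (pos_t_roots n (rootsC n) (posC n)
               (block_simple_roots (ns @ replicate m 1 @ [t]) \<union> {lastC n}))
         = (length ns + m)^2 + (length ns + m))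
   \<and> \<comment> \<open>(D i)\<close>
   (\<forall>ns m n. n \<ge> 4 \<and> sum_list ns + m = n \<and> (\<forall>x\<in>set ns. x > 1) \<longrightarrow>
       card (pos_t_roots n (rootsD n) (posD n) (block_simple_roots (ns @ replicate m 1)))
         = (length ns + m)^2 - m)
   \<and> \<comment> \<open>(D ii)\<close>
   (\<forall>ns m t n. t \<ge> 4 \<and> sum_list ns + t + m = n \<and> (\<forall>x\<in>set ns. x > 1) \<longrightarrow>
       card (pos_t_roots n (rootsD n) (posD n)
               (block_simple_roots (ns @ replicate m 1 @ [t]) \<union> {lastD n}))
         = (length ns + m)^2 + length ns)"
  apply (intro conjI allI impI; elim conjE)
  subgoal by (rule caseA)
  subgoal by (rule caseBi)
  subgoal by (rule caseBii)
  subgoal by (rule caseCi)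
  subgoal by (rule caseCii)
  subgoal by (rule caseDi)
  subgoal by (rule caseDii)
  done

end
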